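(* Let $k\ge1$ be odd and $\Gamma_1=\mathbf{PSL}(2,\mathbb{Z}[i])$. Let $S=\begin{psmallmatrix}0&-1\\1&0\end{psmallmatrix}$, $T=\begin{psmallmatrix}1&1\\0&1\end{psmallmatrix}$, $T_\omega=\begin{psmallmatrix}1&i\\0&1\end{psmallmatrix}$, $L=\begin{psmallmatrix}i&0\\0&-i\end{psmallmatrix}$, $U=TS$, $E=T_\omega SL$. Let $C_p(\Gamma_1,V_{k,k})$ be the space of maps $f:\Gamma_1\to V_{k,k}$ with $f(\gamma_1\gamma_2)=f(\gamma_1)|\gamma_2+f(\gamma_2)$ for all $\gamma_1,\gamma_2\in\Gamma_1$ and $f(T)=f(T_\omega)=f(L)=0$, and let $$W_{k,k}=\ker(\mathbf{1}+S)\cap\ker(\mathbf{1}-L)\cap\ker(\mathbf{1}+U+U^2)\cap\ker(\mathbf{1}+E+E^2)\subset V_{k,k}.$$ Then $f\mapsto f(S)$ is a $\mathbb{C}$-linear isomorphism $C_p(\Gamma_1,V_{k,k})\to W_{k,k}$.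
   Context: $V_{k,k}$ is the space of polynomials $\sum_{0\le i,j\le k}c_{ij}z^i\bar z^j$ ($c_{ij}\in\mathbb{C}$, $z,\bar z$ independent variables) with right action of $\gamma=\begin{psmallmatrix}a&b\\c&e\end{psmallmatrix}$: $(P|\gamma)(z,\bar z)=(cz+e)^k\overline{(cz+e)}^kP\!\left(\frac{az+b}{cz+e},\frac{\bar a\bar z+\bar b}{\bar c\bar z+\bar e}\right)$, extended linearly to the group ring; $\ker(X)=\{P\in V_{k,k}:P|X=0\}$. *)

theory Defs
  imports "HOL-Computational_Algebra.Polynomial" Complex_Main
begin

text \<open>2x2 complex matrices (a,b,c,e) standing for [[a,b],[c,e]].\<close>
type_synonym cmat = "complex \<times> complex \<times> complex \<times> complex"

definition mmul :: "cmat \<Rightarrow> cmat \<Rightarrow> cmat" where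
  "mmul g h = (case g of (a,b,c,d) \<Rightarrow> case h of (a',b',c',d') \<Rightarrow>
      (a*a' + b*c', a*b' + b*d', c*a' + d*c', c*b' + d*d'))"

definition mneg :: "cmat \<Rightarrow> cmat" where
  "mneg g = (case g of (a,b,c,d) \<Rightarrow> (-a,-b,-c,-d))"

definition gauss_int :: "complex \<Rightarrow> bool" where
  "gauss_int z \<longleftrightarrow> Re z \<in> \<int> \<and> Im z \<in> \<int>"

definition SL2ZI :: "cmat set" where
  "SL2ZI = {(a,b,c,d). gauss_int a \<and> gauss_int b \<and> gauss_int c \<and> gauss_int d \<and> a*d - b*c = 1}"

definition proj :: "cmat \<Rightarrow> cmat set" where
  "proj g = {g, mneg g}"

definition PSL2ZI :: "cmat set set" where
  "PSL2ZI = proj ` SL2ZI"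

definition pmul :: "cmat set \<Rightarrow> cmat set \<Rightarrow> cmat set" where
  "pmul X Y = {mmul g h | g h. g \<in> X \<and> h \<in> Y}"

text \<open>V_{k,k}: coefficient arrays c i j of z^i zbar^j with 0 \<le> i,j \<le> k.\<close>
type_synonym vpoly = "nat \<Rightarrow> nat \<Rightarrow> complex"

definition Vkk :: "nat \<Rightarrow> vpoly set" where
  "Vkk k = {P. \<forall>i j. (k < i \<or> k < j) \<longrightarrow> P i j = 0}"

text \<open>Slash action: (P|g)(z,w) = (cz+e)^k (cbar w+ebar)^k P((az+b)/(cz+e),(abar w+bbar)/(cbar w+ebar)),
  i.e. sum_{i,j} P_ij (az+b)^i (cz+e)^(k-i) (abar w+bbar)^j (cbar w+ebar)^(k-j), expanded into coefficients.\<close>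
definition slash :: "nat \<Rightarrow> vpoly \<Rightarrow> cmat \<Rightarrow> vpoly" where
  "slash k P g = (case g of (a,b,c,e) \<Rightarrow>
     (\<lambda>m n. \<Sum>i\<le>k. \<Sum>j\<le>k. P i j
        * coeff ([:b, a:] ^ i * [:e, c:] ^ (k - i)) m
        * coeff ([:cnj b, cnj a:] ^ j * [:cnj e, cnj c:] ^ (k - j)) n))"

text \<open>Action of a PSL class via a representative (independent of the sign).\<close>
definition pslash :: "nat \<Rightarrow> vpoly \<Rightarrow> cmat set \<Rightarrow> vpoly" where
  "pslash k P X = slash k P (SOME g. g \<in> X)"

definition matS :: cmat where "matS = (0, -1, 1, 0)"
definition matT :: cmat where "matT = (1, 1, 0, 1)"
definition matTw :: cmat where "matTw = (1, \<i>, 0, 1)"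
definition matL :: cmat where "matL = (\<i>, 0, 0, -\<i>)"
definition matU :: cmat where "matU = mmul matT matS"
definition matE :: cmat where "matE = mmul (mmul matTw matS) matL"

text \<open>C_p(Gamma_1, V_{k,k}); maps are taken extensional (0 outside Gamma_1).\<close>
definition Cp :: "nat \<Rightarrow> (cmat set \<Rightarrow> vpoly) set" where
  "Cp k = {f. (\<forall>X. X \<notin> PSL2ZI \<longrightarrow> f X = (\<lambda>_ _. 0))
           \<and> (\<forall>X\<in>PSL2ZI. f X \<in> Vkk k)
           \<and> (\<forall>X\<in>PSL2ZI. \<forall>Y\<in>PSL2ZI.
                 f (pmul X Y) = (\<lambda>m n. pslash k (f X) Y m n + f Y m n))
           \<and> f (proj matT) = (\<lambda>_ _. 0) \<and> f (proj matTw) = (\<lambda>_ _. 0)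
           \<and> f (proj matL) = (\<lambda>_ _. 0)}"

definition Wkk :: "nat \<Rightarrow> vpoly set" where
  "Wkk k = {P \<in> Vkk k.
      (\<forall>m n. P m n + slash k P matS m n = 0)
    \<and> (\<forall>m n. P m n - slash k P matL m n = 0)
    \<and> (\<forall>m n. P m n + slash k P matU m n + slash k P (mmul matU matU) m n = 0)
    \<and> (\<forall>m n. P m n + slash k P matE m n + slash k P (mmul matE matE) m n = 0)}"

end

theory Submission
  imports Defs "HOL-Library.Function_Algebras"
begin


definition Am :: "nat \<Rightarrow> cmat \<Rightarrow> nat \<Rightarrow> nat \<Rightarrow> complex" where
  "Am k g i m = (case g of (a,b,c,e) \<Rightarrow> coeff ([:b,a:]^i * [:e,c:]^(k-i)) m)"

definition cnjm :: "cmat \<Rightarrow> cmat" where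
  "cnjm g = (case g of (a,b,c,e) \<Rightarrow> (cnj a, cnj b, cnj c, cnj e))"

lemma slash_Am: "slash k P g = (\<lambda>m n. \<Sum>i\<le>k. \<Sum>j\<le>k. P i j * Am k g i m * Am k (cnjm g) j n)"
  by (cases g) (auto simp: slash_def Am_def cnjm_def)

definition hom :: "nat \<Rightarrow> complex poly \<Rightarrow> complex poly \<Rightarrow> complex poly \<Rightarrow> complex poly" where
  "hom k p U V = (\<Sum>m\<le>k. smult (coeff p m) (U^m * V^(k-m)))"

lemma hom_mult:
  assumes "degree p \<le> k"
  shows "hom (Suc k) (p * [:\<beta>,\<alpha>:]) U V = hom k p U V * (smult \<alpha> U + smult \<beta> V)"
proof -
  have e: "p * [:\<beta>,\<alpha>:] = smult \<beta> p + pCons 0 (smult \<alpha> p)"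
    by (simp add: mult_pCons_right)
  have c: "coeff (p * [:\<beta>,\<alpha>:]) m = \<beta> * coeff p m + (if m = 0 then 0 else \<alpha> * coeff p (m - 1))" for m
    unfolding e by (cases m) (auto simp: coeff_pCons)
  have pk: "coeff p (Suc k) = 0" using assms by (simp add: coeff_eq_0)
  have "hom (Suc k) (p * [:\<beta>,\<alpha>:]) U V =
     (\<Sum>m\<le>Suc k. smult (\<beta> * coeff p m) (U^m * V^(Suc k-m)))
     + (\<Sum>m\<le>Suc k. smult (if m = 0 then 0 else \<alpha> * coeff p (m - 1)) (U^m * V^(Suc k-m)))"
    unfolding hom_def c by (simp add: smult_add_left sum.distrib)
  also have "(\<Sum>m\<le>Suc k. smult (\<beta> * coeff p m) (U^m * V^(Suc k-m)))
       = (\<Sum>m\<le>k. smult (\<beta> * coeff p m) (U^m * V^(Suc k-m)))"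
    by (simp add: pk)
  also have "\<dots> = hom k p U V * smult \<beta> V"
    unfolding hom_def sum_distrib_right
    by (intro sum.cong refl) (simp add: Suc_diff_le mult_ac)
  also have "(\<Sum>m\<le>Suc k. smult (if m = 0 then 0 else \<alpha> * coeff p (m - 1)) (U^m * V^(Suc k-m)))
      = (\<Sum>m\<le>k. smult (\<alpha> * coeff p m) (U^Suc m * V^(k-m)))"
    by (subst sum.atMost_Suc_shift) simp
  also have "\<dots> = hom k p U V * smult \<alpha> U"
    unfolding hom_def sum_distrib_right
    by (intro sum.cong refl) (simp add: mult_ac)
  finally show ?thesis by (simp add: distrib_left add_ac)
qed

lemma degree_lin_pow: "degree ([:b,a:]^i) \<le> i"
  by (rule order_trans[OF degree_power_le]) simp

lemma hom_pow: "hom (i + j) ([:b,a:]^i * [:e,c:]^j) U V = (smult a U + smult b V)^i * (smult c U + smult e V)^j"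
proof (induction j)
  case 0
  show ?case
  proof (induction i)
    case 0 then show ?case by (simp add: hom_def)
  next
    case (Suc i)
    have d: "degree ([:b,a:]^i) \<le> i" by (rule degree_lin_pow)
    have "hom (Suc i + 0) ([:b, a:] ^ Suc i * [:e, c:] ^ 0) U V = hom (Suc i) ([:b,a:]^i * [:b,a:]) U V"
      by (simp add: mult.commute)
    also have "\<dots> = hom i ([:b,a:]^i) U V * (smult a U + smult b V)" by (rule hom_mult[OF d])
    finally show ?case using Suc by (simp add: mult.commute)
  qed
next
  case (Suc j)
  have d: "degree ([:b,a:]^i * [:e,c:]^j) \<le> i + j"
  proof -
    have "degree ([:b,a:]^i) \<le> i" by (rule degree_lin_pow)
    moreover have "degree ([:e,c:]^j) \<le> j" by (rule degree_lin_pow)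
    ultimately show ?thesis using degree_mult_le[of "[:b,a:]^i" "[:e,c:]^j"] by linarith
  qed
  have "hom (i + Suc j) ([:b, a:] ^ i * [:e, c:] ^ Suc j) U V = hom (Suc (i+j)) (([:b,a:]^i * [:e,c:]^j) * [:e,c:]) U V"
    by (simp only: power_Suc2 mult.assoc add_Suc_right)
  also have "\<dots> = hom (i+j) ([:b,a:]^i * [:e,c:]^j) U V * (smult c U + smult e V)" by (rule hom_mult[OF d])
  finally show ?case using Suc by (simp only: power_Suc2 mult.assoc)
qed

lemma Am_key:
  assumes "i \<le> k"
  shows "(\<Sum>m'\<le>k. Am k g i m' * Am k h m' m) = Am k (mmul g h) i m"
proof -
  obtain a b c e where g: "g = (a,b,c,e)" by (cases g) auto
  obtain a' b' c' e' where h: "h = (a',b',c',e')" by (cases h) auto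
  let ?U = "[:b',a':]" and ?V = "[:e',c':]"
  have "(\<Sum>m'\<le>k. Am k g i m' * Am k h m' m) = coeff (hom k ([:b,a:]^i * [:e,c:]^(k-i)) ?U ?V) m"
    by (simp add: hom_def coeff_sum g h Am_def)
  also have "hom k ([:b,a:]^i * [:e,c:]^(k-i)) ?U ?V = (smult a ?U + smult b ?V)^i * (smult c ?U + smult e ?V)^(k-i)"
    using hom_pow[of i "k-i" b a e c ?U ?V] assms by simp
  also have "smult a ?U + smult b ?V = [:a*b' + b*e', a*a' + b*c':]" by simp
  also have "smult c ?U + smult e ?V = [:c*b' + e*e', c*a' + e*c':]" by simp
  finally show ?thesis by (simp add: g h Am_def mmul_def)
qed

lemma cnjm_mmul: "cnjm (mmul g h) = mmul (cnjm g) (cnjm h)"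
  by (cases g; cases h) (simp add: cnjm_def mmul_def)

lemma sum4_swap:
  "(\<Sum>a\<in>A. \<Sum>b\<in>B. \<Sum>c\<in>C. \<Sum>d\<in>D. F a b c d) = (\<Sum>c\<in>C. \<Sum>d\<in>D. \<Sum>a\<in>A. \<Sum>b\<in>B. F a b c d)"
proof -
  have "(\<Sum>a\<in>A. \<Sum>b\<in>B. \<Sum>c\<in>C. \<Sum>d\<in>D. F a b c d) = (\<Sum>a\<in>A. \<Sum>c\<in>C. \<Sum>b\<in>B. \<Sum>d\<in>D. F a b c d)"
    by (rule sum.cong[OF refl], rule sum.swap)
  also have "\<dots> = (\<Sum>c\<in>C. \<Sum>a\<in>A. \<Sum>b\<in>B. \<Sum>d\<in>D. F a b c d)" by (rule sum.swap)
  also have "\<dots> = (\<Sum>c\<in>C. \<Sum>a\<in>A. \<Sum>d\<in>D. \<Sum>b\<in>B. F a b c d)"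
    by (rule sum.cong[OF refl], rule sum.cong[OF refl], rule sum.swap)
  also have "\<dots> = (\<Sum>c\<in>C. \<Sum>d\<in>D. \<Sum>a\<in>A. \<Sum>b\<in>B. F a b c d)"
    by (rule sum.cong[OF refl], rule sum.swap)
  finally show ?thesis .
qed

lemma slash_action: "slash k (slash k P g) h = slash k P (mmul g h)"
proof (intro ext)
  fix m n
  let ?A = "Am k g" and ?B = "Am k (cnjm g)" and ?C = "Am k h" and ?D = "Am k (cnjm h)"
  have "slash k (slash k P g) h m n =
     (\<Sum>m'\<le>k. \<Sum>n'\<le>k. (\<Sum>i\<le>k. \<Sum>j\<le>k. P i j * ?A i m' * ?B j n') * ?C m' m * ?D n' n)"
    by (simp add: slash_Am)
  also have "\<dots> = (\<Sum>m'\<le>k. \<Sum>n'\<le>k. \<Sum>i\<le>k. \<Sum>j\<le>k. P i j * ?A i m' * ?B j n' * ?C m' m * ?D n' n)"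
    by (simp add: sum_distrib_right)
  also have "\<dots> = (\<Sum>i\<le>k. \<Sum>j\<le>k. \<Sum>m'\<le>k. \<Sum>n'\<le>k. P i j * ?A i m' * ?B j n' * ?C m' m * ?D n' n)"
    by (rule sum4_swap)
  also have "\<dots> = (\<Sum>i\<le>k. \<Sum>j\<le>k. P i j * (\<Sum>m'\<le>k. ?A i m' * ?C m' m) * (\<Sum>n'\<le>k. ?B j n' * ?D n' n))"
    by (simp add: sum_distrib_left sum_distrib_right mult_ac)
  also have "\<dots> = slash k P (mmul g h) m n"
    by (simp add: slash_Am Am_key cnjm_mmul)
  finally show "slash k (slash k P g) h m n = slash k P (mmul g h) m n" .
qed


lemma Am_deg:
  assumes "i \<le> k" "k < m"
  shows "Am k g i m = 0"
proof -
  obtain a b c e where g: "g = (a,b,c,e)" by (cases g) auto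
  have "degree ([:b,a:]^i * [:e,c:]^(k-i)) \<le> i + (k - i)"
    using degree_mult_le[of "[:b,a:]^i" "[:e,c:]^(k-i)"] degree_lin_pow[of b a i] degree_lin_pow[of e c "k-i"]
    by linarith
  then show ?thesis using assms by (simp add: Am_def g coeff_eq_0)
qed

lemma slash_Vkk: "slash k P g \<in> Vkk k"
  unfolding Vkk_def slash_Am
  by (auto simp: Am_deg)

lemma mneg_cnjm: "cnjm (mneg g) = mneg (cnjm g)"
  by (cases g) (simp add: cnjm_def mneg_def)

lemma Am_mneg:
  assumes "i \<le> k"
  shows "Am k (mneg g) i m = (-1)^k * Am k g i m"
proof -
  obtain a b c e where g: "g = (a,b,c,e)" by (cases g) auto
  have "[:-b,-a:]^i * [:-e,-c:]^(k-i) = smult ((-1)^(i + (k-i))) ([:b,a:]^i * [:e,c:]^(k-i))"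
  proof -
    have e1: "[:-b,-a:] = smult (-1) [:b,a:]" and e2: "[:-e,-c:] = smult (-1) [:e,c:]" by simp_all
    show ?thesis by (simp only: e1 e2 smult_power mult_smult_left mult_smult_right power_add smult_smult mult.commute)
  qed
  then show ?thesis using assms by (simp add: Am_def g mneg_def)
qed

lemma slash_mneg: "slash k P (mneg g) = slash k P g"
proof -
  have "(-1::complex)^k * (-1)^k = 1" by (simp add: power_mult_distrib[symmetric])
  then show ?thesis
    unfolding slash_Am mneg_cnjm
    by (intro ext sum.cong refl) (auto simp: Am_mneg mult_ac)
qed

lemma Am_id:
  assumes "i \<le> k"
  shows "Am k (1,0,0,1) i m = (if m = i then 1 else 0)"
proof -
  have "[:0,1:]^i = monom (1::complex) i" by (simp add: monom_altdef)
  moreover have "[:1::complex:] ^ (k-i) = 1" by (simp add: one_pCons[symmetric])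
  ultimately show ?thesis by (simp add: Am_def coeff_monom)
qed

lemma cnjm_id: "cnjm (1,0,0,1) = (1,0,0,1)" by (simp add: cnjm_def)

lemma slash_id:
  assumes "P \<in> Vkk k"
  shows "slash k P (1,0,0,1) = P"
proof (intro ext)
  fix m n
  show "slash k P (1,0,0,1) m n = P m n"
  proof (cases "m \<le> k \<and> n \<le> k")
    case True
    have "slash k P (1,0,0,1) m n = (\<Sum>i\<le>k. \<Sum>j\<le>k. if i = m then (if j = n then P i j else 0) else 0)"
      unfolding slash_Am cnjm_id by (intro sum.cong refl) (simp add: Am_id)
    also have "\<dots> = (\<Sum>i\<le>k. if i = m then P i n else 0)"
    proof (intro sum.cong refl)
      fix i assume "i \<in> {..k}"
      show "(\<Sum>j\<le>k. if i = m then if j = n then P i j else 0 else 0) = (if i = m then P i n else 0)"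
        using True by (cases "i = m") (simp_all add: sum.delta')
    qed
    also have "\<dots> = P m n" using True by (simp add: sum.delta')
    finally show ?thesis .
  next
    case False
    then have "P m n = 0" using assms by (auto simp: Vkk_def)
    moreover have "slash k P (1,0,0,1) m n = 0" using slash_Vkk[of k P "(1,0,0,1)"] False by (auto simp: Vkk_def)
    ultimately show ?thesis by simp
  qed
qed

lemma slash_add: "slash k (P + Q) g = slash k P g + slash k Q g"
  unfolding slash_Am by (auto simp: algebra_simps sum.distrib fun_eq_iff)

lemma slash_zero: "slash k 0 g = 0"
  unfolding slash_Am by (auto simp: fun_eq_iff)

lemma slash_uminus: "slash k (- P) g = - slash k P g"
  unfolding slash_Am by (auto simp: sum_negf fun_eq_iff)

lemma slash_diff: "slash k (P - Q) g = slash k P g - slash k Q g"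
  unfolding slash_Am by (auto simp: algebra_simps sum_subtractf fun_eq_iff)

lemma slash_scale: "slash k (\<lambda>m n. c * P m n) g = (\<lambda>m n. c * slash k P g m n)"
  unfolding slash_Am by (auto simp: sum_distrib_left mult_ac)


lemma gi_add[simp]: "gauss_int a \<Longrightarrow> gauss_int b \<Longrightarrow> gauss_int (a + b)"
  by (auto simp: gauss_int_def)
lemma gi_diff[simp]: "gauss_int a \<Longrightarrow> gauss_int b \<Longrightarrow> gauss_int (a - b)"
  by (auto simp: gauss_int_def)
lemma gi_minus[simp]: "gauss_int (- a) = gauss_int a"
  by (auto simp: gauss_int_def)
lemma gi_mult[simp]: "gauss_int a \<Longrightarrow> gauss_int b \<Longrightarrow> gauss_int (a * b)"
  by (auto simp: gauss_int_def)
lemma gi_0[simp]: "gauss_int 0" and gi_1[simp]: "gauss_int 1" and gi_i[simp]: "gauss_int \<i>"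
  by (auto simp: gauss_int_def)
lemma gi_numeral[simp]: "gauss_int (numeral n)" by (auto simp: gauss_int_def)

definition gn :: "complex \<Rightarrow> nat" where "gn z = nat \<lfloor>(cmod z)^2\<rfloor>"

lemma cmod_sq: "(cmod z)^2 = (Re z)^2 + (Im z)^2"
  by (simp add: cmod_def)

lemma gi_cmod_sq_int: "gauss_int z \<Longrightarrow> (cmod z)^2 \<in> \<int>"
  by (auto simp: gauss_int_def cmod_sq)

lemma gn_real: "gauss_int z \<Longrightarrow> real (gn z) = (cmod z)^2"
proof -
  assume "gauss_int z"
  then obtain n where n: "(cmod z)^2 = of_int n" using gi_cmod_sq_int Ints_cases by metis
  then have "n \<ge> 0" by (metis of_int_0_le_iff zero_le_power2)
  then show ?thesis by (simp add: gn_def n)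
qed

lemma gn_less_iff: "gauss_int a \<Longrightarrow> gauss_int b \<Longrightarrow> gn a < gn b \<longleftrightarrow> cmod a < cmod b"
proof -
  assume a: "gauss_int a" and b: "gauss_int b"
  have "gn a < gn b \<longleftrightarrow> real (gn a) < real (gn b)" by simp
  also have "\<dots> \<longleftrightarrow> (cmod a)^2 < (cmod b)^2" using gn_real[OF a] gn_real[OF b] by simp
  also have "\<dots> \<longleftrightarrow> cmod a < cmod b"
    using norm_ge_zero[of a] norm_ge_zero[of b] by (auto intro: power_strict_mono dest: power_less_imp_less_base)
  finally show ?thesis .
qed

lemma gn_eq_iff: "gauss_int a \<Longrightarrow> gauss_int b \<Longrightarrow> gn a = gn b \<longleftrightarrow> cmod a = cmod b"
proof -
  assume a: "gauss_int a" and b: "gauss_int b"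
  have "gn a = gn b \<longleftrightarrow> real (gn a) = real (gn b)" by linarith
  also have "\<dots> \<longleftrightarrow> (cmod a)^2 = (cmod b)^2" using gn_real[OF a] gn_real[OF b] by simp
  also have "\<dots> \<longleftrightarrow> cmod a = cmod b" by (simp add: power2_eq_iff_nonneg)
  finally show ?thesis .
qed

lemma gn_0[simp]: "gn 0 = 0" by (simp add: gn_def)

lemma gn_cong: "cmod a = cmod b \<Longrightarrow> gn a = gn b" by (simp add: gn_def)

definition gr :: "complex \<Rightarrow> complex" where
  "gr z = Complex (of_int \<lfloor>Re z + 1/2\<rfloor>) (of_int \<lfloor>Im z + 1/2\<rfloor>)"

lemma gi_gr[simp]: "gauss_int (gr z)" by (simp add: gr_def gauss_int_def)

lemma gr_bound1: "\<bar>Re (z - gr z)\<bar> \<le> 1/2"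
  unfolding gr_def abs_le_iff by simp linarith
lemma gr_bound2: "\<bar>Im (z - gr z)\<bar> \<le> 1/2"
  unfolding gr_def abs_le_iff by simp linarith
lemmas gr_bound = gr_bound1 gr_bound2

lemma gr_cmod_sq: "(cmod (z - gr z))^2 \<le> 1/2"
proof -
  have sq: "\<bar>x\<bar> \<le> 1/2 \<Longrightarrow> x^2 \<le> 1/4" for x :: real
  proof -
    assume "\<bar>x\<bar> \<le> 1/2"
    then have "\<bar>x\<bar>^2 \<le> (1/2)^2" by (intro power_mono) auto
    then show ?thesis by (simp add: power2_abs power_divide)
  qed
  have a: "(Re (z - gr z))^2 \<le> 1/4" using gr_bound(1)[of z] by (rule sq)
  have b: "(Im (z - gr z))^2 \<le> 1/4" using gr_bound(2)[of z] by (rule sq)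
  show ?thesis using a b by (simp add: cmod_sq)
qed

lemma floor_shift: "\<lfloor>x + real_of_int n + 1/2\<rfloor> = \<lfloor>x + 1/2\<rfloor> + n"
proof -
  have "x + real_of_int n + 1/2 = (x + 1/2) + real_of_int n" by simp
  then show ?thesis by (simp only: floor_add_int)
qed

lemma gr_add_gi: "gauss_int t \<Longrightarrow> gr (z + t) = gr z + t"
  by (auto simp: gr_def gauss_int_def complex_eq_iff floor_shift elim!: Ints_cases)

lemma gr_0[simp]: "gr 0 = 0" by (simp add: gr_def complex_eq_iff)

lemma gr_gi[simp]: "gauss_int t \<Longrightarrow> gr t = t"
  using gr_add_gi[of t 0] by simp

lemma cmod_step:
  assumes "c \<noteq> 0"
  shows "cmod (q * c - d) = cmod c * cmod (d / c - q)"
proof -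
  have "q * c - d = - (c * (d / c - q))" using assms by (simp add: field_simps)
  then show ?thesis by (simp add: norm_mult)
qed

lemma gn_step:
  assumes "c \<noteq> 0" "gauss_int c" "gauss_int d"
  shows "gn (gr (d/c) * c - d) < gn c"
proof -
  have "(cmod (d / c - gr (d/c)))^2 \<le> 1/2" by (rule gr_cmod_sq)
  then have "cmod (d / c - gr (d/c)) < 1"
    using one_le_power[of "cmod (d / c - gr (d/c))" 2] by linarith
  moreover have "cmod c > 0" using assms by simp
  ultimately have "cmod c * cmod (d/c - gr (d/c)) < cmod c"
    using mult_strict_left_mono[of "cmod (d/c - gr (d/c))" 1 "cmod c"] by simp
  then have "cmod (gr (d/c) * c - d) < cmod c"
    using cmod_step[OF assms(1), of "gr (d/c)" d] by simp
  then show ?thesis using assms by (simp add: gn_less_iff)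
qed

function hh :: "nat \<Rightarrow> vpoly \<Rightarrow> complex \<Rightarrow> complex \<Rightarrow> vpoly" where
  "hh k P c d = (if c = 0 \<or> \<not> gauss_int c \<or> \<not> gauss_int d then 0
     else slash k (slash k (hh k P (gr (d/c) * c - d) c) matS + P) (1, gr (d/c), 0, 1))"
  by auto
termination
  by (relation "measure (\<lambda>(k,P,c,d). gn c)") (auto intro: gn_step)

declare hh.simps[simp del]


definition Tm :: "complex \<Rightarrow> cmat" where "Tm q = (1, q, 0, 1)"
definition Ml :: "complex \<Rightarrow> cmat" where "Ml q = (1, 0, q, 1)"
definition Im1 :: cmat where "Im1 = (1,0,0,1)"

lemmas mat_defs = Tm_def Ml_def Im1_def matS_def matT_def matTw_def matL_def matU_def matE_def mmul_def mneg_def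

lemma mmul_assoc: "mmul (mmul a b) c = mmul a (mmul b c)"
  by (cases a; cases b; cases c) (simp add: mmul_def algebra_simps)

lemma slash_eq_mneg: "g = mneg g' \<Longrightarrow> slash k v g = slash k v g'"
  using slash_mneg by simp

lemma sl2: "slash k (slash k v a) b = slash k v (mmul a b)" by (rule slash_action)

locale Wctx =
  fixes k :: nat and P :: vpoly
  assumes PW: "P \<in> Wkk k"
begin

abbreviation "h \<equiv> hh k P"
abbreviation "sl \<equiv> slash k"

lemma PV: "P \<in> Vkk k" using PW unfolding Wkk_def by blast

lemma PS: "sl P matS = - P"
proof -
  have "\<forall>m n. P m n + sl P matS m n = 0" using PW unfolding Wkk_def by blast
  then show ?thesis by (auto simp: fun_eq_iff add_eq_0_iff)
qed

lemma PL: "sl P matL = P"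
proof -
  have "\<forall>m n. P m n - sl P matL m n = 0" using PW unfolding Wkk_def by blast
  then show ?thesis by (auto simp: fun_eq_iff)
qed

lemma PU: "P + sl P matU + sl P (mmul matU matU) = 0"
proof -
  have "\<forall>m n. P m n + sl P matU m n + sl P (mmul matU matU) m n = 0" using PW unfolding Wkk_def by blast
  then show ?thesis by (auto simp: fun_eq_iff)
qed

lemma PE: "P + sl P matE + sl P (mmul matE matE) = 0"
proof -
  have "\<forall>m n. P m n + sl P matE m n + sl P (mmul matE matE) m n = 0" using PW unfolding Wkk_def by blast
  then show ?thesis by (auto simp: fun_eq_iff)
qed

lemma sl_Im1: "v \<in> Vkk k \<Longrightarrow> sl v Im1 = v" by (simp add: Im1_def slash_id)

lemma zero_Vkk: "0 \<in> Vkk k" by (simp add: Vkk_def)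

lemma h_Vkk: "h c d \<in> Vkk k"
  by (subst hh.simps) (auto simp: zero_Vkk slash_Vkk)

lemma h_zero[simp]: "h 0 d = 0" by (subst hh.simps) simp

definition step :: "complex \<Rightarrow> complex \<Rightarrow> complex \<Rightarrow> vpoly" where
  "step c d q = sl (sl (h (q * c - d) c) matS + P) (Tm q)"

lemma h_unfold: "c \<noteq> 0 \<Longrightarrow> gauss_int c \<Longrightarrow> gauss_int d \<Longrightarrow> h c d = step c d (gr (d/c))"
  by (subst hh.simps) (simp add: step_def Tm_def)

lemma h_nongi: "\<not> gauss_int c \<or> \<not> gauss_int d \<Longrightarrow> h c d = 0"
  by (subst hh.simps) auto

lemma Tm_add: "mmul (Tm a) (Tm b) = Tm (a + b)" by (simp add: mat_defs)

lemma h_T: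
  assumes "gauss_int c" "gauss_int d" "gauss_int t"
  shows "h c (d + t * c) = sl (h c d) (Tm t)"
proof (cases "c = 0")
  case True then show ?thesis by (simp add: slash_zero)
next
  case False
  have g: "gr ((d + t * c) / c) = gr (d/c) + t"
    using False gr_add_gi[OF assms(3), of "d/c"] by (simp add: add_divide_distrib)
  have "h c (d + t * c) = step c (d + t*c) (gr (d/c) + t)"
    using h_unfold[of c "d + t*c"] False assms g by simp
  also have "\<dots> = sl (step c d (gr (d/c))) (Tm t)"
    unfolding step_def sl2 Tm_add by (simp add: algebra_simps)
  also have "\<dots> = sl (h c d) (Tm t)" using h_unfold False assms by simp
  finally show ?thesis .
qed

end

lemma hh_scale:
  assumes "gauss_int u" "u \<noteq> 0"
  shows "gauss_int c \<Longrightarrow> gauss_int d \<Longrightarrow> hh k P (u * c) (u * d) = hh k P c d"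
proof (induction k P c d rule: hh.induct)
  case (1 k P c d)
  show ?case
  proof (cases "c = 0")
    case True
    then show ?thesis by (simp add: hh.simps)
  next
    case False
    have q: "gr ((u*d) / (u*c)) = gr (d/c)" using assms(2) by simp
    have e: "gr (d/c) * (u * c) - u * d = u * (gr (d/c) * c - d)" by (simp add: algebra_simps)
    have IH: "hh k P (u * (gr (d/c) * c - d)) (u * c) = hh k P (gr (d/c) * c - d) c"
      using 1 False by simp
    have L: "hh k P (u*c) (u*d) = slash k (slash k (hh k P (gr (d/c) * (u*c) - u*d) (u*c)) matS + P) (1, gr (d/c), 0, 1)"
      by (subst hh.simps) (use False assms 1(2,3) q in simp)
    have R: "hh k P c d = slash k (slash k (hh k P (gr (d/c) * c - d) c) matS + P) (1, gr (d/c), 0, 1)"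
      by (subst hh.simps) (use False assms 1(2,3) in simp)
    show ?thesis unfolding L R e IH ..
  qed
qed

context Wctx begin
lemma h_scale: "gauss_int u \<Longrightarrow> u \<noteq> 0 \<Longrightarrow> gauss_int c \<Longrightarrow> gauss_int d \<Longrightarrow> h (u * c) (u * d) = h c d"
  by (rule hh_scale)

lemma h_neg: "gauss_int c \<Longrightarrow> gauss_int d \<Longrightarrow> h (- c) (- d) = h c d"
  using h_scale[of "-1" c d] by simp

end


context Wctx begin

definition phi :: "complex \<Rightarrow> vpoly" where
  "phi d = P + sl P (mmul (Tm (-d)) matS)"

lemma slP_S_left: "sl P (mmul matS g) = - sl P g"
  by (simp add: sl2[symmetric] PS slash_uminus)

lemma slP_L_left: "sl P (mmul matL g) = sl P g"
  by (simp add: sl2[symmetric] PL)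

lemma kap_m1: "sl P (Tm (-1)) = phi (-1)"
proof -
  have u: "matU = mmul (Tm 1) matS" by (simp add: mat_defs)
  have uu: "mmul matU matU = mmul matS (Tm (-1))" by (simp add: mat_defs)
  have "P + sl P (mmul (Tm 1) matS) - sl P (Tm (-1)) = 0"
    using PU unfolding u[symmetric] uu slP_S_left by simp
  then show ?thesis by (simp add: phi_def algebra_simps)
qed

lemma L_conj1: "sl v (mmul (Tm t) matL) = sl (sl v matL) (Tm (-t))"
proof -
  have "mmul (Tm t) matL = mmul matL (Tm (-t))" by (simp add: mat_defs)
  then show ?thesis by (simp add: sl2)
qed

lemma L_conj2: "sl v (mmul (mmul (Tm t) matS) matL) = sl (sl v matL) (mmul (Tm (-t)) matS)"
proof -
  have "mmul (mmul (Tm t) matS) matL = mneg (mmul matL (mmul (Tm (-t)) matS))" by (simp add: mat_defs)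
  then show ?thesis by (simp add: sl2 slash_mneg)
qed

lemma kap_i: "sl P (Tm (-\<i>)) = phi \<i>"
proof -
  have e: "matE = mneg (mmul matL (mmul (Tm (-\<i>)) matS))" by (simp add: mat_defs)
  have ee: "mmul matE matE = mmul matL (mmul matS (Tm (-\<i>)))" by (simp add: mat_defs)
  have "P + sl P (mmul (Tm (-\<i>)) matS) - sl P (Tm (-\<i>)) = 0"
    using PE unfolding ee slP_L_left slP_S_left unfolding e slash_mneg slP_L_left by simp
  then show ?thesis by (simp add: phi_def algebra_simps)
qed

lemma conjL_rel:
  assumes "sl P (Tm (-t)) = P + sl P (mmul (Tm t) matS)"
  shows "sl P (Tm t) = P + sl P (mmul (Tm (-t)) matS)"
proof -
  have "sl (sl P (Tm (-t))) matL = sl (P + sl P (mmul (Tm t) matS)) matL" using assms by simp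
  then have "sl P (mmul (Tm (-t)) matL) = sl P matL + sl P (mmul (mmul (Tm t) matS) matL)"
    by (simp add: sl2 slash_add)
  then show ?thesis unfolding L_conj1 L_conj2 PL by simp
qed

lemma kap_1: "sl P (Tm 1) = phi 1"
  using conjL_rel[of 1] kap_m1 by (simp add: phi_def)

lemma conjL_rel2:
  assumes "sl P (Tm t) = P + sl P (mmul (Tm t) matS)"
  shows "sl P (Tm (-t)) = P + sl P (mmul (Tm (-t)) matS)"
proof -
  have "sl (sl P (Tm t)) matL = sl (P + sl P (mmul (Tm t) matS)) matL" using assms by simp
  then have "sl P (mmul (Tm t) matL) = sl P matL + sl P (mmul (mmul (Tm t) matS) matL)"
    by (simp add: sl2 slash_add)
  then show ?thesis unfolding L_conj1 L_conj2 PL by simp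
qed

lemma kap_mi: "sl P (Tm \<i>) = phi (-\<i>)"
  using conjL_rel2[of "-\<i>"] kap_i by (simp add: phi_def)

lemma phi_comp: "sl (phi a) (Ml b) + phi b = phi (a + b)"
proof -
  have m: "Ml b = mneg (mmul matS (mmul (Tm (-b)) matS))" by (simp add: mat_defs)
  have m2: "mmul (mmul (Tm (-a)) matS) (Ml b) = mmul (Tm (-(a+b))) matS" by (simp add: mat_defs algebra_simps)
  have "sl (phi a) (Ml b) = sl P (Ml b) + sl P (mmul (mmul (Tm (-a)) matS) (Ml b))"
    unfolding phi_def slash_add sl2 ..
  also have "sl P (Ml b) = - sl P (mmul (Tm (-b)) matS)"
    unfolding m slash_mneg slP_S_left ..
  finally have "sl (phi a) (Ml b) = - sl P (mmul (Tm (-b)) matS) + sl P (mmul (Tm (-(a+b))) matS)"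
    unfolding m2 .
  then show ?thesis unfolding phi_def by (simp add: algebra_simps)
qed

lemma phi_final: "sl (phi d) (mmul matS (Tm d)) + sl P (Tm d) = P"
proof -
  have m: "mmul (mmul (Tm (-d)) matS) (mmul matS (Tm d)) = mneg Im1" by (simp add: mat_defs)
  have "sl (phi d) (mmul matS (Tm d)) = sl P (mmul matS (Tm d)) + P"
    by (simp add: phi_def slash_add sl2 m slash_mneg sl_Im1 PV)
  then show ?thesis by (simp add: slP_S_left)
qed

end


context Wctx begin

lemma C1:
  assumes x: "gauss_int x" and y: "gauss_int y"
    and SP: "h (x + y) (-x) = sl (h x (x + y)) matS + P"
  shows "h (x + 1*y) y = sl (h x y) (Ml 1) + phi 1"
proof -
  have a: "h x (x + y) = sl (h x y) (Tm 1)" using h_T[OF x y, of 1] by (simp add: add.commute)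
  have b: "h (x + y) y = sl (h (x + y) (-x)) (Tm 1)" using h_T[of "x+y" "-x" 1] x y by simp
  have m: "mmul (mmul (Tm 1) matS) (Tm 1) = Ml 1" by (simp add: mat_defs)
  show ?thesis unfolding mult_1 b SP a slash_add sl2 m kap_1 ..
qed

lemma Cm1:
  assumes x: "gauss_int x" and y: "gauss_int y"
    and SP: "h (y - x) (-x) = sl (h x (y - x)) matS + P"
  shows "h (x + (-1)*y) y = sl (h x y) (Ml (-1)) + phi (-1)"
proof -
  have a: "h x (y - x) = sl (h x y) (Tm (-1))" using h_T[OF x y, of "-1"] by simp
  have b: "h (y - x) (-y) = sl (h (y - x) (-x)) (Tm (-1))" using h_T[of "y-x" "-x" "-1"] x y by simp
  have c: "h (x + (-1)*y) y = h (y - x) (-y)" using h_neg[of "y - x" "-y"] x y by simp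
  have m: "mmul (mmul (Tm (-1)) matS) (Tm (-1)) = mneg (Ml (-1))" by (simp add: mat_defs)
  show ?thesis unfolding c b SP a slash_add sl2 m slash_mneg kap_m1 ..
qed

lemma Ci:
  assumes x: "gauss_int x" and y: "gauss_int y"
    and SP: "h (y - \<i>*x) (-x) = sl (h x (y - \<i>*x)) matS + P"
    and LP: "h (y - \<i>*x) (-(\<i>*y)) = sl (h (y - \<i>*x) (\<i>*y)) matL"
  shows "h (x + \<i>*y) y = sl (h x y) (Ml \<i>) + phi \<i>"
proof -
  have a: "h x (y - \<i>*x) = sl (h x y) (Tm (-\<i>))" using h_T[OF x y, of "-\<i>"] by simp
  have b: "h (y - \<i>*x) (\<i>*y) = sl (h (y - \<i>*x) (-x)) (Tm \<i>)"
  proof -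
    have "-x + \<i> * (y - \<i>*x) = \<i>*y" by (simp add: algebra_simps)
    then show ?thesis using h_T[of "y - \<i>*x" "-x" "\<i>"] x y by simp
  qed
  have c: "h (x + \<i>*y) y = h (y - \<i>*x) (-(\<i>*y))"
  proof -
    have "(-\<i>) * (x + \<i>*y) = y - \<i>*x" "(-\<i>) * y = -(\<i>*y)" by (simp_all add: algebra_simps)
    then show ?thesis using h_scale[of "-\<i>" "x + \<i>*y" y] x y by simp
  qed
  have m1: "mmul (Tm (-\<i>)) matS = (-\<i>, -1, 1, 0)" by (simp add: mat_defs)
  have m2: "mmul (-\<i>, -1, 1, 0) (Tm \<i>) = (-\<i>, 0, 1, \<i>)" by (simp add: mat_defs)
  have m3: "mmul (-\<i>, 0, 1, \<i>) matL = Ml \<i>" by (simp add: mat_defs)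
  have m: "mmul (mmul (mmul (Tm (-\<i>)) matS) (Tm \<i>)) matL = Ml \<i>" unfolding m1 m2 m3 ..
  have kk: "sl P (mmul (Tm \<i>) matL) = phi \<i>" unfolding L_conj1 PL kap_i ..
  show ?thesis unfolding c LP b SP a slash_add sl2 m kk ..
qed

lemma Cmi:
  assumes x: "gauss_int x" and y: "gauss_int y"
    and SP: "h (y + \<i>*x) (-x) = sl (h x (y + \<i>*x)) matS + P"
    and LP: "h (y + \<i>*x) (-(-\<i>*y)) = sl (h (y + \<i>*x) (-\<i>*y)) matL"
  shows "h (x + (-\<i>)*y) y = sl (h x y) (Ml (-\<i>)) + phi (-\<i>)"
proof -
  have a: "h x (y + \<i>*x) = sl (h x y) (Tm \<i>)" using h_T[OF x y, of "\<i>"] by simp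
  have b: "h (y + \<i>*x) (-\<i>*y) = sl (h (y + \<i>*x) (-x)) (Tm (-\<i>))"
  proof -
    have "-x + (-\<i>) * (y + \<i>*x) = -\<i>*y" by (simp add: algebra_simps)
    then show ?thesis using h_T[of "y + \<i>*x" "-x" "-\<i>"] x y by simp
  qed
  have c: "h (x + (-\<i>)*y) y = h (y + \<i>*x) (-(-\<i>*y))"
  proof -
    have e1: "\<i> * (x + (-\<i>)*y) = y + \<i>*x" and e2: "\<i> * y = -(-\<i>*y)" by (simp_all add: algebra_simps)
    have "h (\<i> * (x + (-\<i>)*y)) (\<i> * y) = h (x + (-\<i>)*y) y" by (rule h_scale) (use x y in auto)
    then show ?thesis unfolding e1 e2 by (rule sym)
  qed
  have m1: "mmul (Tm \<i>) matS = (\<i>, -1, 1, 0)" by (simp add: mat_defs)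
  have m2: "mmul (\<i>, -1, 1, 0) (Tm (-\<i>)) = (\<i>, 0, 1, -\<i>)" by (simp add: mat_defs)
  have m3: "mmul (\<i>, 0, 1, -\<i>) matL = mneg (Ml (-\<i>))" by (simp add: mat_defs)
  have m: "mmul (mmul (mmul (Tm \<i>) matS) (Tm (-\<i>))) matL = mneg (Ml (-\<i>))" unfolding m1 m2 m3 ..
  have kk: "sl P (mmul (Tm (-\<i>)) matL) = phi (-\<i>)" unfolding L_conj1 PL minus_minus kap_mi ..
  show ?thesis unfolding c LP b SP a slash_add sl2 m kk slash_mneg ..
qed

lemma Ml_add: "mmul (Ml a) (Ml b) = Ml (a + b)" by (simp add: mat_defs algebra_simps)

lemma Ccomp:
  assumes "h (x + a*y) y = sl (h x y) (Ml a) + phi a"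
    and "h ((x + a*y) + b*y) y = sl (h (x + a*y) y) (Ml b) + phi b"
  shows "h (x + (a+b)*y) y = sl (h x y) (Ml (a+b)) + phi (a+b)"
proof -
  have e: "x + (a+b)*y = (x + a*y) + b*y" by (simp add: algebra_simps)
  have "h (x + (a+b)*y) y = sl (sl (h x y) (Ml a) + phi a) (Ml b) + phi b" unfolding e assms(2) assms(1) ..
  also have "\<dots> = sl (h x y) (Ml (a+b)) + (sl (phi a) (Ml b) + phi b)"
    unfolding slash_add sl2 Ml_add by (simp add: add.assoc)
  finally show ?thesis unfolding phi_comp .
qed

end


lemma cmod_lt1_iff: "cmod w < 1 \<longleftrightarrow> (Re w)^2 + (Im w)^2 < 1"
proof -
  have "cmod w < 1 \<longleftrightarrow> (cmod w)^2 < 1"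
    using abs_square_less_1[of "cmod w"] by simp
  then show ?thesis by (simp add: cmod_sq)
qed

lemma sq_le_quarter: "\<bar>s\<bar> \<le> 1/2 \<Longrightarrow> s^2 \<le> (1/4::real)"
proof -
  assume "\<bar>s\<bar> \<le> 1/2"
  then have "\<bar>s\<bar>^2 \<le> (1/2)^2" by (intro power_mono) auto
  then show ?thesis by (simp add: power2_abs power_divide)
qed

lemma geoB:
  assumes "gauss_int q" "\<bar>Re z\<bar> \<le> 1/2" "\<bar>Im z\<bar> \<le> 1/2" "cmod (z - q) < 1"
  shows "Re q \<in> {-1,0,1} \<and> Im q \<in> {-1,0,1}"
proof -
  have "\<bar>Re (z - q)\<bar> < 1" "\<bar>Im (z - q)\<bar> < 1"
    using abs_Re_le_cmod[of "z - q"] abs_Im_le_cmod[of "z - q"] assms(4) by linarith+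
  then have r: "\<bar>Re q\<bar> < 3/2" "\<bar>Im q\<bar> < 3/2" using assms(2,3) by auto
  obtain a b where ab: "Re q = of_int a" "Im q = of_int b" using assms(1) by (auto simp: gauss_int_def elim!: Ints_cases)
  have "\<bar>a\<bar> \<le> 1" "\<bar>b\<bar> \<le> 1" using r ab by linarith+
  then have "a \<in> {-1,0,1}" "b \<in> {-1,0,1}" by auto
  then show ?thesis using ab by auto
qed

lemma geoC:
  assumes "\<bar>Re z\<bar> \<le> 1/2" "\<bar>Im z\<bar> \<le> 1/2" "a \<in> {-1,1}" "b \<in> {-1,1}"
    and "cmod (z - Complex a b) < 1"
  shows "cmod (z - Complex a 0) < 1 \<or> cmod (z - Complex 0 b) < 1"
proof -
  let ?s = "Re z" and ?t = "Im z"
  have s2: "?s^2 \<le> 1/4" and t2: "?t^2 \<le> 1/4" using assms(1,2) sq_le_quarter by auto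
  have a2: "a^2 = 1" and b2: "b^2 = 1" using assms(3,4) by auto
  have h: "(?s - a)^2 + (?t - b)^2 < 1" using assms(5) by (simp add: cmod_lt1_iff)
  have "(?s - a)^2 + ?t^2 < 1 \<or> ?s^2 + (?t - b)^2 < 1"
  proof (rule ccontr)
    assume "\<not> ?thesis"
    then have 1: "(?s - a)^2 + ?t^2 \<ge> 1" and 2: "?s^2 + (?t - b)^2 \<ge> 1" by auto
    have e1: "(?s - a)^2 = ?s^2 - 2*a*?s + 1" using a2 by (simp add: power2_diff)
    have e2: "(?t - b)^2 = ?t^2 - 2*b*?t + 1" using b2 by (simp add: power2_diff)
    show False using 1 2 h s2 t2 unfolding e1 e2 by linarith
  qed
  then show ?thesis by (simp add: cmod_lt1_iff)
qed

lemma geoD: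
  assumes "cmod z = 1"
  shows "\<exists>u\<in>{1,-1,\<i>,-\<i>}. cmod (z - u) < 1"
proof -
  let ?s = "Re z" and ?t = "Im z"
  have n: "?s^2 + ?t^2 = 1" using assms by (simp add: cmod_sq[symmetric])
  have "?s > 1/2 \<or> ?s < -1/2 \<or> ?t > 1/2 \<or> ?t < -1/2"
  proof (rule ccontr)
    assume "\<not> ?thesis"
    then have "\<bar>?s\<bar> \<le> 1/2" "\<bar>?t\<bar> \<le> 1/2" by auto
    then have "?s^2 \<le> 1/4" "?t^2 \<le> 1/4" using sq_le_quarter by auto
    then show False using n by linarith
  qed
  moreover have "cmod (z - 1) < 1 \<longleftrightarrow> ?s > 1/2"
  proof -
    have e: "(Re (z - 1))^2 + (Im (z - 1))^2 = 2 - 2 * ?s" using n by (simp add: power2_diff)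
    show ?thesis unfolding cmod_lt1_iff e by linarith
  qed
  moreover have "cmod (z - (-1)) < 1 \<longleftrightarrow> ?s < -1/2"
  proof -
    have e: "(Re (z - (-1)))^2 + (Im (z - (-1)))^2 = 2 + 2 * ?s" using n by (simp add: power2_sum)
    show ?thesis unfolding cmod_lt1_iff e by linarith
  qed
  moreover have "cmod (z - \<i>) < 1 \<longleftrightarrow> ?t > 1/2"
  proof -
    have e: "(Re (z - \<i>))^2 + (Im (z - \<i>))^2 = 2 - 2 * ?t" using n by (simp add: power2_diff)
    show ?thesis unfolding cmod_lt1_iff e by linarith
  qed
  moreover have "cmod (z - (-\<i>)) < 1 \<longleftrightarrow> ?t < -1/2"
  proof -
    have e: "(Re (z - (-\<i>)))^2 + (Im (z - (-\<i>)))^2 = 2 + 2 * ?t" using n by (simp add: power2_sum)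
    show ?thesis unfolding cmod_lt1_iff e by linarith
  qed
  ultimately show ?thesis by blast
qed

lemma cmod_rel:
  assumes "c \<noteq> 0"
  shows "cmod (d - q * c) = cmod c * cmod (d / c - q)"
proof -
  have "d - q * c = c * (d / c - q)" using assms by (simp add: field_simps)
  then show ?thesis by (simp add: norm_mult)
qed

lemma gn_lt_rel:
  assumes "c \<noteq> 0" "gauss_int c" "gauss_int d" "gauss_int q"
  shows "gn (d - q * c) < gn c \<longleftrightarrow> cmod (d / c - q) < 1"
proof -
  have "gn (d - q * c) < gn c \<longleftrightarrow> cmod (d - q * c) < cmod c" using assms by (simp add: gn_less_iff)
  also have "\<dots> \<longleftrightarrow> cmod c * cmod (d / c - q) < cmod c * 1" using cmod_rel[OF assms(1)] by simp
  also have "\<dots> \<longleftrightarrow> cmod (d / c - q) < 1" using assms(1) by (simp add: mult_less_cancel_left_pos)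
  finally show ?thesis .
qed

lemma gn_minus_commute: "gn (a - b) = gn (b - a)" by (simp add: gn_def norm_minus_commute)
lemma gn_neg[simp]: "gn (- a) = gn a" by (simp add: gn_def)
lemma gn_i: "gn (\<i> * a) = gn a" by (simp add: gn_def norm_mult)
lemma gn_mi: "gn (- \<i> * a) = gn a" by (simp add: gn_def norm_mult)
lemma gn_eq0: "gauss_int a \<Longrightarrow> gn a = 0 \<longleftrightarrow> a = 0"
  using gn_real[of a] by auto


lemma Vkk_add: "a \<in> Vkk k \<Longrightarrow> b \<in> Vkk k \<Longrightarrow> a + b \<in> Vkk k"
  by (auto simp: Vkk_def)

context Wctx begin

definition ILall :: "nat \<Rightarrow> bool" where
  "ILall n \<longleftrightarrow> (\<forall>c d q. gauss_int c \<longrightarrow> gauss_int d \<longrightarrow> gauss_int q \<longrightarrow> c \<noteq> 0 \<longrightarrow> gn c < n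
      \<longrightarrow> gn (d - q*c) < gn c \<longrightarrow> h c d = step c d q)"

lemma ILallD: "ILall n \<Longrightarrow> gauss_int c \<Longrightarrow> gauss_int d \<Longrightarrow> gauss_int q \<Longrightarrow> c \<noteq> 0 \<Longrightarrow> gn c < n
      \<Longrightarrow> gn (d - q*c) < gn c \<Longrightarrow> h c d = step c d q"
  unfolding ILall_def by blast

lemma step0: "step c d 0 = sl (h (-d) c) matS + P"
proof -
  have "Tm 0 = Im1" by (simp add: mat_defs)
  then show ?thesis unfolding step_def
    by (simp add: sl_Im1 Vkk_add slash_Vkk PV)
qed

lemma Lprop:
  assumes IL: "ILall n"
  shows "gauss_int x \<Longrightarrow> gauss_int y \<Longrightarrow> gn x < n \<Longrightarrow> h x (-y) = sl (h x y) matL"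
proof (induction "gn x" arbitrary: x y rule: less_induct)
  case less
  show ?case
  proof (cases "x = 0")
    case True then show ?thesis by (simp add: slash_zero)
  next
    case False
    let ?q = "gr (y/x)"
    let ?R = "h (?q * x - y) x"
    have gs: "gn (?q * x - y) < gn x" using gn_step[OF False less.prems(1,2)] .
    have A: "h x y = step x y ?q" using h_unfold[OF False less.prems(1,2)] .
    have gs2: "gn (- y - (- ?q) * x) < gn x" using gs by (simp add: gn_minus_commute algebra_simps)
    have B: "h x (-y) = step x (-y) (-?q)"
      using ILallD[OF IL less.prems(1) _ _ False less.prems(3) gs2] less.prems by simp
    have e: "(-?q) * x - (-y) = - (?q * x - y)" by (simp add: algebra_simps)
    have C: "h (- (?q * x - y)) x = sl ?R matL"
    proof -
      have "h (- (?q * x - y)) x = h (?q * x - y) (-x)"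
        using h_neg[of "?q * x - y" "-x"] less.prems by simp
      also have "\<dots> = sl ?R matL" using less.hyps[OF gs] less.prems gs by simp
      finally show ?thesis .
    qed
    have m: "mmul (mmul matL matS) (Tm (-?q)) = mneg (mmul (mmul matS (Tm ?q)) matL)" by (simp add: mat_defs)
    have "h x (-y) = sl ?R (mmul (mmul matL matS) (Tm (-?q))) + sl P (Tm (-?q))"
      unfolding B step_def e C slash_add sl2 ..
    also have "\<dots> = sl ?R (mmul (mmul matS (Tm ?q)) matL) + sl P (mmul (Tm ?q) matL)"
      unfolding m slash_mneg L_conj1 PL ..
    also have "\<dots> = sl (h x y) matL"
      unfolding A step_def slash_add sl2 ..
    finally show ?thesis .
  qed
qed

lemma Sprop_a:
  assumes IL: "ILall n" and x: "gauss_int x" and y: "gauss_int y" and lt: "gn x < gn y" and yn: "gn y < n"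
  shows "h y (-x) = sl (h x y) matS + P"
proof -
  have y0: "y \<noteq> 0" using lt by auto
  have "gn (-x - 0 * y) < gn y" using lt by simp
  then have "h y (-x) = step y (-x) 0" using ILallD[OF IL y _ _ y0 yn] x by simp
  then show ?thesis by (simp add: step0)
qed

lemma SS: "mmul matS matS = mneg Im1" by (simp add: mat_defs)

lemma Sprop_b:
  assumes IL: "ILall n" and x: "gauss_int x" and y: "gauss_int y" and lt: "gn y < gn x" and xn: "gn x < n"
  shows "h y (-x) = sl (h x y) matS + P"
proof -
  have x0: "x \<noteq> 0" using lt by auto
  have "gn (y - 0 * x) < gn x" using lt by simp
  then have "h x y = step x y 0" using ILallD[OF IL x y _ x0 xn] by simp
  also have "\<dots> = sl (h y (-x)) matS + P" unfolding step0 using h_neg[of y "-x"] x y by simp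
  finally have "sl (h x y) matS = sl (sl (h y (-x)) matS + P) matS" by simp
  also have "\<dots> = h y (-x) - P" unfolding slash_add sl2 SS slash_mneg PS
    by (simp add: sl_Im1 h_Vkk)
  finally show ?thesis by simp
qed

lemma tie_alg:
  assumes A: "h x y = sl (sl R matS + P) (Tm u)"
    and B: "H = sl R (Ml (-u)) + phi (-u)"
  shows "H = sl (h x y) matS + P"
proof -
  have m: "mmul (mmul matS (Tm u)) matS = mneg (Ml (-u))" by (simp add: mat_defs)
  have "sl (h x y) matS + P = sl R (mmul (mmul matS (Tm u)) matS) + sl P (mmul (Tm u) matS) + P"
    unfolding A slash_add sl2 ..
  also have "\<dots> = H" unfolding m slash_mneg B phi_def by (simp add: algebra_simps)
  finally show ?thesis by simp
qed

end


context Wctx begin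

lemma Sprop_tie:
  assumes IL: "ILall n" and x: "gauss_int x" and y: "gauss_int y" and eq: "gn x = gn y"
    and x0: "x \<noteq> 0" and xn: "gn x < n"
  shows "h y (-x) = sl (h x y) matS + P"
proof -
  have "cmod y = cmod x" using eq x y by (simp add: gn_eq_iff)
  then have "cmod (y / x) = 1" using x0 by (simp add: norm_divide)
  then obtain u where u: "u \<in> {1,-1,\<i>,-\<i>}" and uz: "cmod (y/x - u) < 1" using geoD by blast
  have gu: "gauss_int u" using u by auto
  have gl: "gn (y - u * x) < gn x" using gn_lt_rel[OF x0 x y gu] uz by simp
  have A: "h x y = step x y u" using ILallD[OF IL x y gu x0 xn gl] .
  let ?xx = "u * x - y"
  have gxx: "gauss_int ?xx" using x y gu by simp
  have gxxl: "gn ?xx < gn y" using gl eq by (simp add: gn_minus_commute)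
  have yn: "gn y < n" using eq xn by simp
  have hy: "h y (-x) = h (-y) x" using h_neg[of y "-x"] x y by simp
  have B: "h (-y) x = sl (h ?xx x) (Ml (-u)) + phi (-u)"
  proof -
    consider "u = 1" | "u = -1" | "u = \<i>" | "u = -\<i>" using u by auto
    then show ?thesis
    proof cases
      case 1
      have SP: "h (x - ?xx) (-?xx) = sl (h ?xx (x - ?xx)) matS + P"
        using Sprop_a[OF IL gxx _ _ yn] 1 x y gxxl by simp
      have "h (?xx + (-1)*x) x = sl (h ?xx x) (Ml (-1)) + phi (-1)" by (rule Cm1[OF gxx x SP])
      then show ?thesis using 1 by simp
    next
      case 2
      have SP: "h (?xx + x) (-?xx) = sl (h ?xx (?xx + x)) matS + P"
        using Sprop_a[OF IL gxx _ _, of "-y"] 2 x y gxxl yn by simp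
      have "h (?xx + 1*x) x = sl (h ?xx x) (Ml 1) + phi 1" by (rule C1[OF gxx x SP])
      then show ?thesis using 2 by simp
    next
      case 3
      have e: "x + \<i> * ?xx = -\<i> * y" using 3 by (simp add: algebra_simps)
      have SP: "h (x + \<i> * ?xx) (-?xx) = sl (h ?xx (x + \<i> * ?xx)) matS + P"
        unfolding e using Sprop_a[OF IL gxx _ _, of "-\<i> * y"] x y gxxl yn by (simp add: gn_mi gn_i)
      have LP: "h (x + \<i>*?xx) (-(-\<i>*x)) = sl (h (x + \<i>*?xx) (-\<i>*x)) matL"
        using Lprop[OF IL, of "x + \<i>*?xx" "-\<i>*x"] x y gu yn unfolding e by (simp add: gn_mi gn_i)
      have "h (?xx + (-\<i>)*x) x = sl (h ?xx x) (Ml (-\<i>)) + phi (-\<i>)" by (rule Cmi[OF gxx x SP LP])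
      then show ?thesis using 3 by simp
    next
      case 4
      have e: "x - \<i> * ?xx = \<i> * y" using 4 by (simp add: algebra_simps)
      have SP: "h (x - \<i> * ?xx) (-?xx) = sl (h ?xx (x - \<i> * ?xx)) matS + P"
        unfolding e using Sprop_a[OF IL gxx _ _, of "\<i> * y"] x y gxxl yn by (simp add: gn_i)
      have LP: "h (x - \<i>*?xx) (-(\<i>*x)) = sl (h (x - \<i>*?xx) (\<i>*x)) matL"
        using Lprop[OF IL, of "x - \<i>*?xx" "\<i>*x"] x y gu yn unfolding e by (simp add: gn_i)
      have "h (?xx + \<i>*x) x = sl (h ?xx x) (Ml \<i>) + phi \<i>" by (rule Ci[OF gxx x SP LP])
      then show ?thesis using 4 by simp
    qed
  qed
  show ?thesis unfolding hy
    by (rule tie_alg[OF A[unfolded step_def] B])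
qed

end


context Wctx begin

lemma Sprop:
  assumes IL: "ILall n" and x: "gauss_int x" and y: "gauss_int y" and nz: "x \<noteq> 0 \<or> y \<noteq> 0"
    and xn: "gn x < n" and yn: "gn y < n"
  shows "h y (-x) = sl (h x y) matS + P"
proof -
  consider "gn x < gn y" | "gn y < gn x" | "gn x = gn y" by linarith
  then show ?thesis
  proof cases
    case 1 then show ?thesis using Sprop_a[OF IL x y _ yn] by simp
  next
    case 2 then show ?thesis using Sprop_b[OF IL x y _ xn] by simp
  next
    case 3
    then have "x \<noteq> 0" using nz gn_eq0[OF x] gn_eq0[OF y] by auto
    then show ?thesis using Sprop_tie[OF IL x y 3 _ xn] by simp
  qed
qed

lemma Cunit_all:
  assumes IL: "ILall n" and c: "gauss_int c" and d: "gauss_int d" and c0: "c \<noteq> 0"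
    and u: "u \<in> {1,-1,\<i>,-\<i>}" and dn: "gn d < n" and dun: "gn (d - u*c) < n"
  shows "h (-d + u*c) c = sl (h (-d) c) (Ml u) + phi u"
proof -
  have md: "gauss_int (-d)" using d by simp
  consider "u = 1" | "u = -1" | "u = \<i>" | "u = -\<i>" using u by auto
  then show ?thesis
  proof cases
    case 1
    have SP: "h (-d + c) (-(-d)) = sl (h (-d) (-d + c)) matS + P"
      using Sprop[OF IL md, of "-d + c"] c d c0 dn dun 1 by (simp add: gn_minus_commute)
    show ?thesis using C1[OF md c SP] 1 by simp
  next
    case 2
    have SP: "h (c - -d) (-(-d)) = sl (h (-d) (c - -d)) matS + P"
      using Sprop[OF IL md, of "c - -d"] c d c0 dn dun 2 by (simp add: add.commute)
    show ?thesis using Cm1[OF md c SP] 2 by simp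
  next
    case 3
    have e: "c - \<i> * -d = \<i> * (d - \<i> * c)" by (simp add: algebra_simps)
    have gg: "gn (c - \<i> * -d) < n" unfolding e gn_i using dun 3 by simp
    have SP: "h (c - \<i> * -d) (-(-d)) = sl (h (-d) (c - \<i> * -d)) matS + P"
      using Sprop[OF IL md, of "c - \<i> * -d"] c d c0 dn gg by simp
    have LP: "h (c - \<i> * -d) (-(\<i>*c)) = sl (h (c - \<i> * -d) (\<i>*c)) matL"
      using Lprop[OF IL, of "c - \<i> * -d" "\<i>*c"] c d gg by simp
    show ?thesis using Ci[OF md c SP LP] 3 by simp
  next
    case 4
    have e: "c + \<i> * -d = -\<i> * (d - (-\<i>) * c)" by (simp add: algebra_simps)
    have gg: "gn (c + \<i> * -d) < n" unfolding e gn_mi using dun 4 by simp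
    have SP: "h (c + \<i> * -d) (-(-d)) = sl (h (-d) (c + \<i> * -d)) matS + P"
      using Sprop[OF IL md, of "c + \<i> * -d"] c d c0 dn gg by simp
    have LP: "h (c + \<i> * -d) (-(-\<i>*c)) = sl (h (c + \<i> * -d) (-\<i>*c)) matL"
      using Lprop[OF IL, of "c + \<i> * -d" "-\<i>*c"] c d gg by simp
    show ?thesis using Cmi[OF md c SP LP] 4 by simp
  qed
qed

end


context Wctx begin

lemma step_T:
  "step c (d + t * c) (q + t) = sl (step c d q) (Tm t)"
  unfolding step_def sl2 Tm_add by (simp add: algebra_simps)

lemma Ml0: "Ml 0 = Im1" by (simp add: mat_defs)
lemma phi0: "phi 0 = 0"
proof -
  have m: "mmul (Tm 0) matS = matS" by (simp add: mat_defs)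
  show ?thesis unfolding phi_def minus_zero m PS by simp
qed

lemma MlST: "mmul (mmul (Ml q) matS) (Tm q) = matS" by (simp add: mat_defs)

lemma step_delta:
  assumes C: "h (-d + q*c) c = sl (h (-d) c) (Ml q) + phi q"
  shows "step c d q = step c d 0"
proof -
  have e: "q * c - d = -d + q*c" by simp
  have "step c d q = sl (h (-d) c) (mmul (mmul (Ml q) matS) (Tm q)) + (sl (phi q) (mmul matS (Tm q)) + sl P (Tm q))"
    unfolding step_def e C slash_add sl2 by (simp add: add.assoc)
  also have "\<dots> = sl (h (-d) c) matS + P" unfolding MlST phi_final ..
  finally show ?thesis by (simp add: step0)
qed

lemma ILstep:
  assumes IL: "ILall n"
  shows "ILall (Suc n)"
  unfolding ILall_def
proof (intro allI impI)
  fix c d q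
  assume c: "gauss_int c" and d: "gauss_int d" and q: "gauss_int q" and c0: "c \<noteq> 0"
    and cn: "gn c < Suc n" and lt: "gn (d - q * c) < gn c"
  show "h c d = step c d q"
  proof (cases "gn c < n")
    case True show ?thesis by (rule ILallD[OF IL c d q c0 True lt])
  next
    case False
    then have cn': "gn c = n" using cn by simp
    define q0 where "q0 = gr (d/c)"
    define d0 where "d0 = d - q0 * c"
    define dl where "dl = q - q0"
    have gq0: "gauss_int q0" by (simp add: q0_def)
    have gd0: "gauss_int d0" using d c gq0 by (simp add: d0_def)
    have gdl: "gauss_int dl" using q gq0 by (simp add: dl_def)
    have dd: "d = d0 + q0 * c" by (simp add: d0_def)
    have qq: "q = dl + q0" by (simp add: dl_def)
    have z: "d0 / c = d/c - gr (d/c)" using c0 by (simp add: d0_def q0_def field_simps)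
    have gr0: "gr (d0/c) = 0" unfolding z by (simp add: gr_def complex_eq_iff) linarith+
    have h0: "h c d0 = step c d0 0" using h_unfold[OF c0 c gd0] gr0 by simp
    have b1: "\<bar>Re (d0/c)\<bar> \<le> 1/2" "\<bar>Im (d0/c)\<bar> \<le> 1/2" unfolding z by (rule gr_bound1, rule gr_bound2)
    have "(cmod (d0/c))^2 \<le> 1/2" unfolding z by (rule gr_cmod_sq)
    moreover have "1 \<le> cmod (d0/c) \<Longrightarrow> 1 \<le> (cmod (d0/c))^2" by (rule one_le_power)
    ultimately have "cmod (d0/c) < 1" by linarith
    then have "cmod (d0/c - 0) < 1" by simp
    then have gd0n: "gn d0 < n" using gn_lt_rel[OF c0 c gd0, of 0] cn' by simp
    have ltd: "gn (d0 - dl * c) < gn c" using lt by (simp add: dd qq algebra_simps)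
    have cz: "cmod (d0/c - dl) < 1" using gn_lt_rel[OF c0 c gd0 gdl] ltd by simp
    have ltdn: "gn (d0 - dl * c) < n" using ltd cn' by simp
    have reim: "Re dl \<in> {-1,0,1} \<and> Im dl \<in> {-1,0,1}" using geoB[OF gdl b1 cz] .
    have CC: "h (-d0 + dl*c) c = sl (h (-d0) c) (Ml dl) + phi dl"
    proof -
      have dlc: "dl = Complex (Re dl) (Im dl)" by simp
      have unit: "h (-d0 + u*c) c = sl (h (-d0) c) (Ml u) + phi u"
        if "u \<in> {1,-1,\<i>,-\<i>}" "gn (d0 - u*c) < n" for u
        by (rule Cunit_all[OF IL c gd0 c0 that(1) gd0n that(2)])
      have comp: "h (-d0 + (a + b)*c) c = sl (h (-d0) c) (Ml (a + b)) + phi (a + b)"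
        if a: "a \<in> {1,-1}" and b: "b \<in> {\<i>,-\<i>}" and ab: "dl = a + b" for a b
      proof -
        have cab: "cmod (d0/c - (a + b)) < 1" using cz ab by simp
        have ga: "gauss_int a" "gauss_int b" using a b by auto
        have au: "a \<in> {1,-1,\<i>,-\<i>}" and bu: "b \<in> {1,-1,\<i>,-\<i>}" using a b by auto
        have "cmod (d0/c - a) < 1 \<or> cmod (d0/c - b) < 1"
        proof -
          obtain ra where ra: "a = Complex ra 0" "ra \<in> {-1,1}" using a by (auto simp: complex_eq_iff)
          obtain rb where rb: "b = Complex 0 rb" "rb \<in> {-1,1}" using b by (auto simp: complex_eq_iff)
          have "a + b = Complex ra rb" using ra rb by (simp add: complex_eq_iff)
          then show ?thesis using geoC[OF b1 ra(2) rb(2)] cab ra(1) rb(1) by simp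
        qed
        then show ?thesis
        proof
          assume "cmod (d0/c - a) < 1"
          then have l1: "gn (d0 - a*c) < n" using gn_lt_rel[OF c0 c gd0 ga(1)] cn' by simp
          have l2: "gn ((d0 - a*c) - b*c) < n" using ltdn ab by (simp add: algebra_simps)
          have s1: "h (-d0 + a*c) c = sl (h (-d0) c) (Ml a) + phi a" using unit[of a] a l1 by auto
          have s2: "h ((-d0 + a*c) + b*c) c = sl (h (-d0 + a*c) c) (Ml b) + phi b"
            using Cunit_all[OF IL c _ c0 bu _ l2] c gd0 ga b l1 by (simp add: algebra_simps)
          show ?thesis by (rule Ccomp[OF s1 s2])
        next
          assume "cmod (d0/c - b) < 1"
          then have l1: "gn (d0 - b*c) < n" using gn_lt_rel[OF c0 c gd0 ga(2)] cn' by simp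
          have l2: "gn ((d0 - b*c) - a*c) < n" using ltdn ab by (simp add: algebra_simps)
          have s1: "h (-d0 + b*c) c = sl (h (-d0) c) (Ml b) + phi b" using unit[of b] b l1 by auto
          have s2: "h ((-d0 + b*c) + a*c) c = sl (h (-d0 + b*c) c) (Ml a) + phi a"
            using Cunit_all[OF IL c _ c0 au _ l2] c gd0 ga a l1 by (simp add: algebra_simps)
          have "h (-d0 + (b + a)*c) c = sl (h (-d0) c) (Ml (b + a)) + phi (b + a)" by (rule Ccomp[OF s1 s2])
          then show ?thesis by (simp add: add.commute)
        qed
      qed
      from reim consider
          "Re dl = 0" "Im dl = 0" | "Re dl = 1" "Im dl = 0" | "Re dl = -1" "Im dl = 0"
        | "Re dl = 0" "Im dl = 1" | "Re dl = 0" "Im dl = -1"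
        | "Re dl = 1" "Im dl = 1" | "Re dl = 1" "Im dl = -1"
        | "Re dl = -1" "Im dl = 1" | "Re dl = -1" "Im dl = -1" by auto
      then show ?thesis
      proof cases
        case 1 then have "dl = 0" by (simp add: complex_eq_iff)
        then show ?thesis by (simp add: Ml0 phi0 sl_Im1 h_Vkk)
      next
        case 2 then have "dl = 1" by (simp add: complex_eq_iff)
        then show ?thesis using unit[of 1] ltdn by simp
      next
        case 3 then have "dl = -1" by (simp add: complex_eq_iff)
        then show ?thesis using unit[of "-1"] ltdn by simp
      next
        case 4 then have "dl = \<i>" by (simp add: complex_eq_iff)
        then show ?thesis using unit[of "\<i>"] ltdn by simp
      next
        case 5 then have "dl = -\<i>" by (simp add: complex_eq_iff)
        then show ?thesis using unit[of "-\<i>"] ltdn by simp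
      next
        case 6 then have "dl = 1 + \<i>" by (simp add: complex_eq_iff)
        then show ?thesis using comp[of 1 "\<i>"] by simp
      next
        case 7 then have "dl = 1 + -\<i>" by (simp add: complex_eq_iff)
        then show ?thesis using comp[of 1 "-\<i>"] by simp
      next
        case 8 then have "dl = -1 + \<i>" by (simp add: complex_eq_iff)
        then show ?thesis using comp[of "-1" "\<i>"] by simp
      next
        case 9 then have "dl = -1 + -\<i>" by (simp add: complex_eq_iff)
        then show ?thesis using comp[of "-1" "-\<i>"] by simp
      qed
    qed
    have "h c d = sl (h c d0) (Tm q0)" using h_T[OF c gd0 gq0] dd by simp
    also have "\<dots> = sl (step c d0 dl) (Tm q0)" unfolding h0 step_delta[OF CC] ..
    also have "\<dots> = step c d q" unfolding step_T[symmetric] dd qq ..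
    finally show ?thesis .
  qed
qed

lemma ILall_all: "ILall n"
proof (induction n)
  case 0 show ?case by (simp add: ILall_def)
next
  case (Suc n) then show ?case by (rule ILstep)
qed

lemma IL: "gauss_int c \<Longrightarrow> gauss_int d \<Longrightarrow> gauss_int q \<Longrightarrow> c \<noteq> 0
      \<Longrightarrow> gn (d - q*c) < gn c \<Longrightarrow> h c d = step c d q"
  using ILallD[OF ILall_all] by blast

lemma Lprop_all: "gauss_int x \<Longrightarrow> gauss_int y \<Longrightarrow> h x (-y) = sl (h x y) matL"
  using Lprop[OF ILall_all[of "Suc (gn x)"]] by simp

lemma Sprop_all: "gauss_int x \<Longrightarrow> gauss_int y \<Longrightarrow> x \<noteq> 0 \<or> y \<noteq> 0 \<Longrightarrow> h y (-x) = sl (h x y) matS + P"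
  using Sprop[OF ILall_all[of "Suc (gn x + gn y)"]] by simp

end


lemma SL2ZI_iff: "(a,b,c,e) \<in> SL2ZI \<longleftrightarrow> gauss_int a \<and> gauss_int b \<and> gauss_int c \<and> gauss_int e \<and> a*e - b*c = 1"
  by (simp add: SL2ZI_def)

lemma gi_unit:
  assumes "gauss_int a" "gauss_int e" "a * e = 1"
  shows "a \<in> {1,-1,\<i>,-\<i>}"
proof -
  have a0: "a \<noteq> 0" and e0: "e \<noteq> 0" using assms(3) by auto
  have "cmod a * cmod e = 1" using assms(3) by (metis norm_mult norm_one)
  then have "(cmod a)^2 * (cmod e)^2 = 1" by (metis power_mult_distrib one_power2)
  then have "real (gn a) * real (gn e) = 1" using gn_real assms by simp
  then have "gn a * gn e = 1" by (simp flip: of_nat_mult)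
  then have "gn a = 1" by simp
  then have n: "(Re a)^2 + (Im a)^2 = 1" using gn_real[OF assms(1)] by (simp add: cmod_sq)
  obtain x y where xy: "Re a = of_int x" "Im a = of_int y" using assms(1) by (auto simp: gauss_int_def elim!: Ints_cases)
  have "x^2 + y^2 = 1" using n xy by (metis of_int_eq_1_iff of_int_add of_int_power)
  then have "(x = 1 \<or> x = -1) \<and> y = 0 \<or> x = 0 \<and> (y = 1 \<or> y = -1)"
  proof -
    assume s: "x^2 + y^2 = 1"
    have "x^2 \<ge> 0" "y^2 \<ge> 0" by simp_all
    have "\<bar>x\<bar> \<le> 1"
    proof (rule ccontr)
      assume "\<not> \<bar>x\<bar> \<le> 1"
      then have "\<bar>x\<bar> \<ge> 2" by simp
      then have "\<bar>x\<bar>^2 \<ge> 2^2" by (intro power_mono) auto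
      then have "x^2 \<ge> 4" by (simp add: power2_abs)
      then show False using s zero_le_power2[of y] by linarith
    qed
    moreover have "\<bar>y\<bar> \<le> 1"
    proof (rule ccontr)
      assume "\<not> \<bar>y\<bar> \<le> 1"
      then have "\<bar>y\<bar> \<ge> 2" by simp
      then have "\<bar>y\<bar>^2 \<ge> 2^2" by (intro power_mono) auto
      then have "y^2 \<ge> 4" by (simp add: power2_abs)
      then show False using s zero_le_power2[of x] by linarith
    qed
    ultimately have "x \<in> {-1,0,1}" "y \<in> {-1,0,1}" by auto
    then show ?thesis using s by auto
  qed
  then show ?thesis using xy by (auto simp: complex_eq_iff)
qed

context Wctx begin

lemma h10: "h 1 0 = P"
proof -
  have "h 1 0 = step 1 0 (gr (0/1))" by (rule h_unfold) auto
  also have "\<dots> = P" by (simp add: step0 slash_zero)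
  finally show ?thesis .
qed

lemma Ccocycle:
  "gauss_int x \<Longrightarrow> gauss_int y \<Longrightarrow> x \<noteq> 0 \<or> y \<noteq> 0 \<Longrightarrow> (a,b,c,e) \<in> SL2ZI \<Longrightarrow>
    h (x*a + y*c) (x*b + y*e) = sl (h x y) (a,b,c,e) + h c e"
proof (induction "gn c" arbitrary: x y a b c e rule: less_induct)
  case less
  have ga: "gauss_int a" and gb: "gauss_int b" and gc: "gauss_int c" and ge: "gauss_int e"
    and det: "a*e - b*c = 1" using less.prems(4) by (auto simp: SL2ZI_iff)
  note x = less.prems(1) and y = less.prems(2)
  show ?case
  proof (cases "c = 0")
    case True
    then have ae: "a * e = 1" using det by simp
    have u: "a \<in> {1,-1,\<i>,-\<i>}" by (rule gi_unit[OF ga ge ae])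
    consider "a = 1" | "a = -1" | "a = \<i>" | "a = -\<i>" using u by auto
    then show ?thesis
    proof cases
      case 1
      then have "e = 1" using ae by simp
      then have "(a,b,c,e) = Tm b" using 1 True by (simp add: Tm_def)
      then show ?thesis using h_T[OF x y gb] 1 True \<open>e = 1\<close> by (simp add: algebra_simps)
    next
      case 2
      then have "e = -1" using ae by (simp add: minus_equation_iff)
      then have "(a,b,c,e) = mneg (Tm (-b))" using 2 True by (simp add: mat_defs algebra_simps)
      moreover have "h (-x) (x*b - y) = h x (y + (-b)*x)"
        using h_neg[of x "y + (-b)*x"] x y gb by (simp add: algebra_simps)
      ultimately show ?thesis using h_T[OF x y, of "-b"] gb 2 True \<open>e = -1\<close> by (simp add: slash_mneg)
    next
      case 3
      have "a \<noteq> 0" using ae by auto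
      then have "e = 1 / a" using ae by (simp add: field_simps)
      then have "e = -\<i>" using 3 by simp
      have m: "(a,b,c,e) = mmul (Tm (\<i>*b)) matL" using 3 True \<open>e = -\<i>\<close> by (simp add: mat_defs algebra_simps)
      have g2: "gauss_int (y + (\<i>*b)*x)" using x y gb by simp
      have "h (\<i>*x) (x*b - \<i>*y) = h (\<i> * x) (\<i> * (-(y + (\<i>*b)*x)))" by (simp add: algebra_simps)
      also have "\<dots> = h x (-(y + (\<i>*b)*x))" by (rule h_scale) (use x y gb g2 in auto)
      also have "\<dots> = sl (h x (y + (\<i>*b)*x)) matL" by (rule Lprop_all[OF x g2])
      also have "\<dots> = sl (h x y) (a,b,c,e)" proof -
        have gt: "gauss_int (\<i>*b)" using gb by simp
        show ?thesis unfolding m h_T[OF x y gt] sl2 ..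
      qed
      finally show ?thesis using 3 True \<open>e = -\<i>\<close> by (simp add: algebra_simps)
    next
      case 4
      have "a \<noteq> 0" using ae by auto
      then have "e = 1 / a" using ae by (simp add: field_simps)
      then have "e = \<i>" using 4 by simp
      have m: "(a,b,c,e) = mneg (mmul (Tm (-\<i>*b)) matL)" using 4 True \<open>e = \<i>\<close> by (simp add: mat_defs algebra_simps)
      have g2: "gauss_int (y + (-\<i>*b)*x)" using x y gb by simp
      have "h (-\<i>*x) (x*b + \<i>*y) = h (\<i> * x) (\<i> * (-(y + (-\<i>*b)*x)))"
        using h_neg[of "\<i>*x" "\<i> * (-(y + (-\<i>*b)*x))"] x y gb g2 by (simp add: algebra_simps)
      also have "\<dots> = h x (-(y + (-\<i>*b)*x))" by (rule h_scale) (use x y gb g2 in auto)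
      also have "\<dots> = sl (h x (y + (-\<i>*b)*x)) matL" by (rule Lprop_all[OF x g2])
      also have "\<dots> = sl (h x y) (a,b,c,e)" proof -
        have gt: "gauss_int (-\<i>*b)" using gb by simp
        show ?thesis unfolding m slash_mneg h_T[OF x y gt] sl2 ..
      qed
      finally show ?thesis using 4 True \<open>e = \<i>\<close> by (simp add: algebra_simps)
    qed
  next
    case False
    let ?q = "gr (a/c)"
    have gq: "gauss_int ?q" by simp
    have lt: "gn (?q * c - a) < gn c" by (rule gn_step[OF False gc ga])
    have sl2': "(c, e, ?q*c - a, ?q*e - b) \<in> SL2ZI" using ga gb gc ge det by (simp add: SL2ZI_iff algebra_simps)
    have dec: "(a,b,c,e) = mmul (mmul (Tm ?q) matS) (c, e, ?q*c - a, ?q*e - b)" by (simp add: mat_defs algebra_simps)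
    have r1: "gauss_int (x * ?q + y)" using x y by simp
    have r1nz: "x * ?q + y \<noteq> 0 \<or> - x \<noteq> 0" using less.prems(3) by auto
    have IH1: "h ((x * ?q + y) * c + (-x) * (?q*c - a)) ((x * ?q + y) * e + (-x) * (?q*e - b))
        = sl (h (x * ?q + y) (-x)) (c, e, ?q*c - a, ?q*e - b) + h (?q*c - a) (?q*e - b)"
      by (rule less.hyps[OF lt r1 _ r1nz sl2']) (use x in simp)
    have IH2: "h (1 * c + 0 * (?q*c - a)) (1 * e + 0 * (?q*e - b))
        = sl (h 1 0) (c, e, ?q*c - a, ?q*e - b) + h (?q*c - a) (?q*e - b)"
      by (rule less.hyps[OF lt _ _ _ sl2']) auto
    have hS: "h (x * ?q + y) (-x) = sl (sl (h x y) (Tm ?q)) matS + P"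
    proof -
      have "h (y + ?q * x) (-x) = sl (h x (y + ?q * x)) matS + P"
        by (rule Sprop_all) (use x y less.prems(3) in auto)
      then show ?thesis using h_T[OF x y gq] by (simp add: algebra_simps)
    qed
    have e1: "(x * ?q + y) * c + (-x) * (?q*c - a) = x*a + y*c" by (simp add: algebra_simps)
    have e2: "(x * ?q + y) * e + (-x) * (?q*e - b) = x*b + y*e" by (simp add: algebra_simps)
    have "h (x*a + y*c) (x*b + y*e) = sl (h x y) (mmul (mmul (Tm ?q) matS) (c, e, ?q*c - a, ?q*e - b))
        + (sl P (c, e, ?q*c - a, ?q*e - b) + h (?q*c - a) (?q*e - b))"
      using IH1 unfolding e1 e2 hS slash_add sl2 by (simp add: add.assoc)
    also have "\<dots> = sl (h x y) (a,b,c,e) + h c e" using IH2 h10 dec by simp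
    finally show ?thesis .
  qed
qed

end


lemma mneg_mneg[simp]: "mneg (mneg g) = g" by (cases g) (simp add: mneg_def)
lemma proj_mneg: "proj (mneg g) = proj g" by (auto simp: proj_def)
lemma mmul_mneg_left: "mmul (mneg g) g' = mneg (mmul g g')"
  by (cases g; cases g') (simp add: mmul_def mneg_def)
lemma mmul_mneg_right: "mmul g (mneg g') = mneg (mmul g g')"
  by (cases g; cases g') (simp add: mmul_def mneg_def)

lemma pmul_proj: "pmul (proj g) (proj g') = proj (mmul g g')"
proof -
  have e1: "mneg (mmul g g') = mmul (mneg g) g'" by (simp add: mmul_mneg_left)
  have e2: "mmul (mneg g) (mneg g') = mmul g g'" by (simp add: mmul_mneg_left mmul_mneg_right)
  have e3: "mmul g (mneg g') = mneg (mmul g g')" by (simp add: mmul_mneg_right)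
  show ?thesis unfolding pmul_def proj_def
  proof (intro set_eqI iffI)
    fix z assume "z \<in> {mmul x y |x y. x \<in> {g, mneg g} \<and> y \<in> {g', mneg g'}}"
    then obtain x y where "z = mmul x y" "x \<in> {g, mneg g}" "y \<in> {g', mneg g'}" by blast
    then show "z \<in> {mmul g g', mneg (mmul g g')}" using e1 e2 e3 by auto
  next
    fix z assume "z \<in> {mmul g g', mneg (mmul g g')}"
    then show "z \<in> {mmul x y |x y. x \<in> {g, mneg g} \<and> y \<in> {g', mneg g'}}"
      using e1 by blast
  qed
qed

lemma SL2ZI_mmul: "g \<in> SL2ZI \<Longrightarrow> g' \<in> SL2ZI \<Longrightarrow> mmul g g' \<in> SL2ZI"
proof -
  assume a: "g \<in> SL2ZI" "g' \<in> SL2ZI"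
  obtain a b c d where g: "g = (a,b,c,d)" by (cases g) auto
  obtain a' b' c' d' where g': "g' = (a',b',c',d')" by (cases g') auto
  have "(a*a' + b*c')*(c*b' + d*d') - (a*b' + b*d')*(c*a' + d*c') = (a*d - b*c)*(a'*d' - b'*c')"
    by (simp add: algebra_simps)
  then show ?thesis using a by (simp add: g g' SL2ZI_iff mmul_def)
qed

lemma SL2ZI_mneg: "g \<in> SL2ZI \<Longrightarrow> mneg g \<in> SL2ZI"
  by (cases g) (simp add: SL2ZI_iff mneg_def)

lemma PSL2ZI_E: "X \<in> PSL2ZI \<Longrightarrow> (\<And>g. g \<in> SL2ZI \<Longrightarrow> X = proj g \<Longrightarrow> thesis) \<Longrightarrow> thesis"
  unfolding PSL2ZI_def by auto

lemma proj_in: "g \<in> SL2ZI \<Longrightarrow> proj g \<in> PSL2ZI" by (simp add: PSL2ZI_def)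

lemma some_proj: "(SOME x. x \<in> proj g) = g \<or> (SOME x. x \<in> proj g) = mneg g"
proof -
  have "g \<in> proj g" by (simp add: proj_def)
  then have "(SOME x. x \<in> proj g) \<in> proj g" by (rule someI)
  then show ?thesis by (simp add: proj_def)
qed

lemma pslash_proj: "pslash k v (proj g) = slash k v g"
  using some_proj[of g] by (auto simp: pslash_def slash_mneg)

lemma gen_SL: "matS \<in> SL2ZI" "matT \<in> SL2ZI" "matTw \<in> SL2ZI" "matL \<in> SL2ZI" "Im1 \<in> SL2ZI"
  "gauss_int t \<Longrightarrow> Tm t \<in> SL2ZI"
  by (simp_all add: SL2ZI_iff mat_defs)

lemma Cp_cocycle:
  assumes F: "F \<in> Cp k" and g: "g \<in> SL2ZI" and g': "g' \<in> SL2ZI"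
  shows "F (proj (mmul g g')) = slash k (F (proj g)) g' + F (proj g')"
proof -
  have "F (pmul (proj g) (proj g')) = (\<lambda>m n. pslash k (F (proj g)) (proj g') m n + F (proj g') m n)"
    using F proj_in[OF g] proj_in[OF g'] unfolding Cp_def by blast
  then show ?thesis by (simp add: pmul_proj pslash_proj plus_fun_def)
qed

lemma Cp_Vkk: "F \<in> Cp k \<Longrightarrow> g \<in> SL2ZI \<Longrightarrow> F (proj g) \<in> Vkk k"
  using proj_in unfolding Cp_def by blast

lemma Cp_out: "F \<in> Cp k \<Longrightarrow> X \<notin> PSL2ZI \<Longrightarrow> F X = 0"
  unfolding Cp_def by (auto simp: zero_fun_def)

lemma Cp_gens: "F \<in> Cp k \<Longrightarrow> F (proj matT) = 0 \<and> F (proj matTw) = 0 \<and> F (proj matL) = 0"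
  unfolding Cp_def by (auto simp: zero_fun_def)

lemma Cp_I: assumes F: "F \<in> Cp k" shows "F (proj Im1) = 0"
proof -
  have "mmul Im1 Im1 = Im1" by (simp add: mat_defs)
  then have "F (proj Im1) = slash k (F (proj Im1)) Im1 + F (proj Im1)"
    using Cp_cocycle[OF F gen_SL(5) gen_SL(5)] by simp
  then have "F (proj Im1) = F (proj Im1) + F (proj Im1)"
    using slash_id[OF Cp_Vkk[OF F gen_SL(5)]] by (simp add: Im1_def)
  then show ?thesis by simp
qed

lemma Cp_proj_eq: "F \<in> Cp k \<Longrightarrow> g = mneg Im1 \<Longrightarrow> F (proj g) = 0"
  using Cp_I proj_mneg by metis

lemma Cp_W:
  assumes F: "F \<in> Cp k"
  shows "F (proj matS) \<in> Wkk k"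
proof -
  let ?P = "F (proj matS)"
  have sS: "matS \<in> SL2ZI" and sT: "matT \<in> SL2ZI" and sTw: "matTw \<in> SL2ZI" and sL: "matL \<in> SL2ZI"
    using gen_SL by auto
  have z: "F (proj matT) = 0" "F (proj matTw) = 0" "F (proj matL) = 0" using Cp_gens[OF F] by auto
  have V: "?P \<in> Vkk k" using Cp_Vkk[OF F sS] .
  have "F (proj (mmul matS matS)) = 0" by (rule Cp_proj_eq[OF F]) (simp add: mat_defs)
  then have rS: "slash k ?P matS + ?P = 0" using Cp_cocycle[OF F sS sS] by simp
  have sSL: "mmul matS matL \<in> SL2ZI" using SL2ZI_mmul[OF sS sL] .
  have fSL: "F (proj (mmul matS matL)) = slash k ?P matL" using Cp_cocycle[OF F sS sL] z by simp
  have "F (proj (mmul (mmul matS matL) (mmul matS matL))) = 0" by (rule Cp_proj_eq[OF F]) (simp add: mat_defs)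
  then have "slash k ?P (mmul matL (mmul matS matL)) + slash k ?P matL = 0"
    using Cp_cocycle[OF F sSL sSL] fSL by (simp add: slash_action)
  moreover have "mmul matL (mmul matS matL) = matS" by (simp add: mat_defs)
  ultimately have "slash k ?P matS + slash k ?P matL = 0" by simp
  then have a1: "slash k ?P matL = - slash k ?P matS" by (simp add: add_eq_0_iff)
  have a2: "slash k ?P matS = - ?P" using rS by (simp add: add_eq_0_iff2)
  have rL: "slash k ?P matL = ?P" using a1 a2 by simp
  have sU: "matU \<in> SL2ZI" using SL2ZI_mmul[OF sT sS] by (simp add: matU_def)
  have fU: "F (proj matU) = ?P" using Cp_cocycle[OF F sT sS] z by (simp add: matU_def slash_zero)
  have sUU: "mmul matU matU \<in> SL2ZI" using SL2ZI_mmul[OF sU sU] .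
  have fUU: "F (proj (mmul matU matU)) = slash k ?P matU + ?P" using Cp_cocycle[OF F sU sU] fU by simp
  have "F (proj (mmul (mmul matU matU) matU)) = 0" by (rule Cp_proj_eq[OF F]) (simp add: mat_defs)
  then have "slash k ?P (mmul matU matU) + slash k ?P matU + ?P = 0"
    using Cp_cocycle[OF F sUU sU] fUU fU by (simp add: slash_add slash_action add.assoc)
  then have rU: "?P + slash k ?P matU + slash k ?P (mmul matU matU) = 0" by (simp add: algebra_simps)
  have sTS: "mmul matTw matS \<in> SL2ZI" using SL2ZI_mmul[OF sTw sS] .
  have sE: "matE \<in> SL2ZI" using SL2ZI_mmul[OF sTS sL] by (simp add: matE_def)
  have fTS: "F (proj (mmul matTw matS)) = ?P" using Cp_cocycle[OF F sTw sS] z by (simp add: slash_zero)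
  have fE: "F (proj matE) = ?P" using Cp_cocycle[OF F sTS sL] z fTS rL by (simp add: matE_def)
  have sEE: "mmul matE matE \<in> SL2ZI" using SL2ZI_mmul[OF sE sE] .
  have fEE: "F (proj (mmul matE matE)) = slash k ?P matE + ?P" using Cp_cocycle[OF F sE sE] fE by simp
  have "mmul (mmul matE matE) matE = Im1" by (simp add: mat_defs)
  then have "F (proj (mmul (mmul matE matE) matE)) = 0" using Cp_I[OF F] by simp
  then have "slash k ?P (mmul matE matE) + slash k ?P matE + ?P = 0"
    using Cp_cocycle[OF F sEE sE] fEE fE by (simp add: slash_add slash_action add.assoc)
  then have rE: "?P + slash k ?P matE + slash k ?P (mmul matE matE) = 0" by (simp add: algebra_simps)
  have w1: "\<forall>m n. ?P m n + slash k ?P matS m n = 0"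
  proof (intro allI)
    fix m n show "?P m n + slash k ?P matS m n = 0" using fun_cong[OF fun_cong[OF rS], of m n] by (simp add: add.commute)
  qed
  have w2: "\<forall>m n. ?P m n - slash k ?P matL m n = 0" using rL by simp
  have w3: "\<forall>m n. ?P m n + slash k ?P matU m n + slash k ?P (mmul matU matU) m n = 0"
  proof (intro allI)
    fix m n show "?P m n + slash k ?P matU m n + slash k ?P (mmul matU matU) m n = 0"
      using fun_cong[OF fun_cong[OF rU], of m n] by simp
  qed
  have w4: "\<forall>m n. ?P m n + slash k ?P matE m n + slash k ?P (mmul matE matE) m n = 0"
  proof (intro allI)
    fix m n show "?P m n + slash k ?P matE m n + slash k ?P (mmul matE matE) m n = 0"
      using fun_cong[OF fun_cong[OF rE], of m n] by simp
  qed
  show ?thesis unfolding Wkk_def using V w1 w2 w3 w4 by blast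
qed


lemma gi_of_int[simp]: "gauss_int (of_int i)" by (simp add: gauss_int_def)

lemma Cp_Tm_zero:
  assumes F: "F \<in> Cp k"
  shows "F (proj (Tm (of_int a + \<i> * of_int b))) = 0"
proof -
  have z: "F (proj matT) = 0" "F (proj matTw) = 0" using Cp_gens[OF F] by auto
  have step: "F (proj (Tm (t + s))) = 0 \<longleftrightarrow> F (proj (Tm t)) = 0"
    if t: "gauss_int t" and s: "s = 1 \<or> s = \<i>" for t s
  proof -
    have ms: "Tm s \<in> SL2ZI" "F (proj (Tm s)) = 0" using s z by (auto simp: Tm_def matT_def matTw_def SL2ZI_iff)
    have e: "Tm (t + s) = mmul (Tm t) (Tm s)" by (simp add: mat_defs)
    have c: "F (proj (Tm (t + s))) = slash k (F (proj (Tm t))) (Tm s)"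
      using Cp_cocycle[OF F gen_SL(6)[OF t] ms(1)] ms(2) e by simp
    have bk: "slash k (slash k (F (proj (Tm t))) (Tm s)) (Tm (-s)) = F (proj (Tm t))"
      using slash_id[OF Cp_Vkk[OF F gen_SL(6)[OF t]]] by (simp add: slash_action mat_defs)
    show ?thesis using c bk by (auto simp: slash_zero)
  qed
  have I0: "F (proj (Tm 0)) = 0" using Cp_I[OF F] by (simp add: Tm_def Im1_def)
  have A: "F (proj (Tm (of_int a))) = 0"
  proof (induction a rule: int_induct[where k=0])
    case base show ?case using I0 by simp
  next
    case (step1 i) then show ?case using step[of "of_int i" 1] by (simp add: zero_fun_def)
  next
    case (step2 i) then show ?case using step[of "of_int i - 1" 1] by (simp add: zero_fun_def)
  qed
  show ?thesis
  proof (induction b rule: int_induct[where k=0])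
    case base show ?case using A by simp
  next
    case (step1 i) then show ?case using step[of "of_int a + \<i> * of_int i" "\<i>"] by (simp add: algebra_simps zero_fun_def)
  next
    case (step2 i) then show ?case using step[of "of_int a + \<i> * of_int i - \<i>" "\<i>"] by (simp add: algebra_simps zero_fun_def)
  qed
qed

lemma Cp_Tm_zero': "F \<in> Cp k \<Longrightarrow> gauss_int t \<Longrightarrow> F (proj (Tm t)) = 0"
proof -
  assume F: "F \<in> Cp k" and t: "gauss_int t"
  obtain a b where ab: "Re t = of_int a" "Im t = of_int b" using t by (auto simp: gauss_int_def elim!: Ints_cases)
  have "t = of_int a + \<i> * of_int b" using ab by (simp add: complex_eq_iff)
  then show ?thesis using Cp_Tm_zero[OF F] by simp
qed

context Wctx begin

definition Fp :: "cmat set \<Rightarrow> vpoly" where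
  "Fp X = (if X \<in> PSL2ZI then (case SOME g. g \<in> X of (a,b,c,d) \<Rightarrow> h c d) else 0)"

lemma Fp_proj:
  assumes "(a,b,c,d) \<in> SL2ZI"
  shows "Fp (proj (a,b,c,d)) = h c d"
proof -
  have gi: "gauss_int c" "gauss_int d" using assms by (auto simp: SL2ZI_iff)
  have "proj (a,b,c,d) \<in> PSL2ZI" using assms by (rule proj_in)
  then show ?thesis using some_proj[of "(a,b,c,d)"] h_neg[OF gi]
    by (auto simp: Fp_def mneg_def)
qed

lemma Fp_S: "Fp (proj matS) = P"
  using Fp_proj[of 0 "-1" 1 0] gen_SL(1) h10 by (simp add: matS_def)

lemma Fp_Cp: "Fp \<in> Cp k"
  unfolding Cp_def
proof (intro CollectI conjI ballI allI impI)
  fix X assume "X \<notin> PSL2ZI" then show "Fp X = (\<lambda>_ _. 0)" by (simp add: Fp_def zero_fun_def)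
next
  fix X assume "X \<in> PSL2ZI" then show "Fp X \<in> Vkk k"
    by (auto simp: Fp_def h_Vkk split: prod.split)
next
  fix X Y assume X: "X \<in> PSL2ZI" and Y: "Y \<in> PSL2ZI"
  obtain g where g: "g \<in> SL2ZI" "X = proj g" using X by (rule PSL2ZI_E)
  obtain g' where g': "g' \<in> SL2ZI" "Y = proj g'" using Y by (rule PSL2ZI_E)
  obtain a b c d where gg: "g = (a,b,c,d)" by (cases g) auto
  obtain a' b' c' d' where gg': "g' = (a',b',c',d')" by (cases g') auto
  have gi: "gauss_int c" "gauss_int d" and det: "a*d - b*c = 1" using g(1) gg by (auto simp: SL2ZI_iff)
  have nz: "c \<noteq> 0 \<or> d \<noteq> 0" using det by auto
  have gm: "mmul g g' \<in> SL2ZI" using SL2ZI_mmul[OF g(1) g'(1)] .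
  have "Fp (pmul X Y) = Fp (proj (mmul g g'))" by (simp add: g g' pmul_proj)
  also have "\<dots> = h (c*a' + d*c') (c*b' + d*d')"
    using gm Fp_proj by (simp add: gg gg' mmul_def)
  also have "\<dots> = sl (h c d) g' + h c' d'" using Ccocycle[OF gi nz] g'(1) gg' by simp
  also have "\<dots> = (\<lambda>m n. pslash k (Fp X) Y m n + Fp Y m n)"
    using Fp_proj g g' gg gg' by (simp add: pslash_proj plus_fun_def)
  finally show "Fp (pmul X Y) = (\<lambda>m n. pslash k (Fp X) Y m n + Fp Y m n)" .
next
  show "Fp (proj matT) = (\<lambda>_ _. 0)" using Fp_proj[of 1 1 0 1] gen_SL(2)
    by (simp add: matT_def zero_fun_def)
next
  show "Fp (proj matTw) = (\<lambda>_ _. 0)" using Fp_proj[of 1 "\<i>" 0 1] gen_SL(3)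
    by (simp add: matTw_def zero_fun_def)
next
  show "Fp (proj matL) = (\<lambda>_ _. 0)" using Fp_proj[of "\<i>" 0 0 "-\<i>"] gen_SL(4)
    by (simp add: matL_def zero_fun_def)
qed

lemma Cp_eq_Fp:
  assumes F: "F \<in> Cp k" and FS: "F (proj matS) = P"
  shows "(a,b,c,e) \<in> SL2ZI \<Longrightarrow> F (proj (a,b,c,e)) = h c e"
proof (induction "gn c" arbitrary: a b c e rule: less_induct)
  case less
  have ga: "gauss_int a" and gb: "gauss_int b" and gc: "gauss_int c" and ge: "gauss_int e"
    and det: "a*e - b*c = 1" using less.prems by (auto simp: SL2ZI_iff)
  have z: "F (proj matL) = 0" using Cp_gens[OF F] by auto
  show ?case
  proof (cases "c = 0")
    case True
    then have ae: "a * e = 1" using det by simp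
    have a0: "a \<noteq> 0" using ae by auto
    have ee: "e = 1 / a" using ae a0 by (simp add: field_simps)
    have u: "a \<in> {1,-1,\<i>,-\<i>}" by (rule gi_unit[OF ga ge ae])
    have TL: "F (proj (mmul (Tm t) matL)) = 0" if "gauss_int t" for t
      using Cp_cocycle[OF F gen_SL(6)[OF that] gen_SL(4)] Cp_Tm_zero'[OF F that] z by (simp add: slash_zero)
    have "F (proj (a,b,c,e)) = 0"
    proof -
      consider "a = 1" | "a = -1" | "a = \<i>" | "a = -\<i>" using u by auto
      then show ?thesis
      proof cases
        case 1 then have "(a,b,c,e) = Tm b" using True ee by (simp add: Tm_def)
        then show ?thesis using Cp_Tm_zero'[OF F gb] by simp
      next
        case 2 then have "(a,b,c,e) = mneg (Tm (-b))" using True ee by (simp add: mat_defs)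
        then show ?thesis using Cp_Tm_zero'[OF F, of "-b"] gb by (simp add: proj_mneg)
      next
        case 3 then have "(a,b,c,e) = mmul (Tm (\<i>*b)) matL" using True ee by (simp add: mat_defs algebra_simps)
        then show ?thesis using TL[of "\<i>*b"] gb by simp
      next
        case 4 then have "(a,b,c,e) = mneg (mmul (Tm (-\<i>*b)) matL)" using True ee by (simp add: mat_defs algebra_simps)
        then show ?thesis using TL[of "-\<i>*b"] gb by (simp add: proj_mneg)
      qed
    qed
    then show ?thesis using True by simp
  next
    case False
    let ?q = "gr (a/c)"
    let ?g' = "(c, e, ?q*c - a, ?q*e - b)"
    have gq: "gauss_int ?q" by simp
    have lt: "gn (?q * c - a) < gn c" by (rule gn_step[OF False gc ga])
    have s': "?g' \<in> SL2ZI" using ga gb gc ge det by (simp add: SL2ZI_iff algebra_simps)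
    have dec: "(a,b,c,e) = mmul (mmul (Tm ?q) matS) ?g'" by (simp add: mat_defs)
    have sTS: "mmul (Tm ?q) matS \<in> SL2ZI" using SL2ZI_mmul[OF gen_SL(6)[OF gq] gen_SL(1)] .
    have fTS: "F (proj (mmul (Tm ?q) matS)) = P"
      using Cp_cocycle[OF F gen_SL(6)[OF gq] gen_SL(1)] Cp_Tm_zero'[OF F gq] FS by (simp add: slash_zero)
    have "F (proj (a,b,c,e)) = sl P ?g' + F (proj ?g')"
      using Cp_cocycle[OF F sTS s'] fTS dec by simp
    also have "F (proj ?g') = h (?q*c - a) (?q*e - b)" by (rule less.hyps[OF lt s'])
    also have "sl P ?g' + h (?q*c - a) (?q*e - b) = h c e"
      using Ccocycle[of 1 0 c e "?q*c - a" "?q*e - b"] s' h10 by simp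
    finally show ?thesis .
  qed
qed

end

lemma Cp_add:
  assumes f: "f \<in> Cp k" and g: "g \<in> Cp k"
  shows "(\<lambda>X m n. f X m n + g X m n) \<in> Cp k"
proof -
  have ps: "pslash k (\<lambda>m n. v m n + w m n) Y = (\<lambda>m n. pslash k v Y m n + pslash k w Y m n)" for v w Y
  proof -
    have e: "(\<lambda>m n. v m n + w m n) = v + w" by (simp add: plus_fun_def)
    show ?thesis unfolding pslash_def e slash_add by (simp add: plus_fun_def)
  qed
  show ?thesis using f g unfolding Cp_def
    by (auto simp: Vkk_def ps fun_eq_iff)
qed

lemma Cp_scale:
  assumes f: "f \<in> Cp k"
  shows "(\<lambda>X m n. c * f X m n) \<in> Cp k"
proof -
  have ps: "pslash k (\<lambda>m n. c * v m n) Y = (\<lambda>m n. c * pslash k v Y m n)" for v Y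
    by (simp add: pslash_def slash_scale)
  show ?thesis using f unfolding Cp_def
    by (auto simp: Vkk_def ps fun_eq_iff algebra_simps)
qed

theorem proposition5p1:
  fixes k :: nat
  assumes "k \<ge> 1" and "odd k"
  shows "(\<forall>f\<in>Cp k. \<forall>g\<in>Cp k. (\<lambda>X m n. f X m n + g X m n) \<in> Cp k)
       \<and> (\<forall>f\<in>Cp k. \<forall>c::complex. (\<lambda>X m n. c * f X m n) \<in> Cp k)
       \<and> bij_betw (\<lambda>f. f (proj matS)) (Cp k) (Wkk k)"
proof (intro conjI ballI allI)
  fix f g assume "f \<in> Cp k" "g \<in> Cp k" then show "(\<lambda>X m n. f X m n + g X m n) \<in> Cp k" by (rule Cp_add)
next
  fix f and c :: complex assume "f \<in> Cp k" then show "(\<lambda>X m n. c * f X m n) \<in> Cp k" by (rule Cp_scale)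
next
  show "bij_betw (\<lambda>f. f (proj matS)) (Cp k) (Wkk k)"
    unfolding bij_betw_def
  proof
    show "inj_on (\<lambda>f. f (proj matS)) (Cp k)"
    proof (rule inj_onI)
      fix F G assume F: "F \<in> Cp k" and G: "G \<in> Cp k" and eq: "F (proj matS) = G (proj matS)"
      interpret Wctx k "F (proj matS)" by unfold_locales (rule Cp_W[OF F])
      show "F = G"
      proof
        fix X
        show "F X = G X"
        proof (cases "X \<in> PSL2ZI")
          case True
          then obtain g where g: "g \<in> SL2ZI" "X = proj g" by (rule PSL2ZI_E)
          obtain a b c e where gg: "g = (a,b,c,e)" by (cases g) auto
          show ?thesis using Cp_eq_Fp[OF F refl] Cp_eq_Fp[OF G eq[symmetric]] g gg by simp
        next
          case False then show ?thesis using Cp_out[OF F] Cp_out[OF G] by simp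
        qed
      qed
    qed
  next
    show "(\<lambda>f. f (proj matS)) ` Cp k = Wkk k"
    proof
      show "(\<lambda>f. f (proj matS)) ` Cp k \<subseteq> Wkk k" using Cp_W by blast
    next
      show "Wkk k \<subseteq> (\<lambda>f. f (proj matS)) ` Cp k"
      proof
        fix P assume P: "P \<in> Wkk k"
        interpret Wctx k P by unfold_locales (rule P)
        show "P \<in> (\<lambda>f. f (proj matS)) ` Cp k"
          using Fp_Cp Fp_S by (metis image_eqI)
      qed
    qed
  qed
qed


end
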